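(* Let $k\in\{1,2,\dots\}\cup\{\infty\}$, let $M$ be a one-dimensional locally Euclidean topological space (not necessarily Hausdorff or second countable), let $\mathcal{U}$ be a $C^k$-atlas on $M$, and let $U\subset M$ be an open subset homeomorphic to $\mathbb{R}$. Then there exists a homeomorphism $\varphi\colon U\to\mathbb{R}$ such that $\mathcal{U}\cup\{(U,\varphi)\}$ is a $C^k$-atlas on $M$, $C^k$-compatible with $\mathcal{U}$.
   Context: A chart on $M$ is a homeomorphism of an open subset of $M$ onto an open subset of $\mathbb{R}$; charts $(U,\varphi),(V,\psi)$ are $C^k$-compatible if $U\cap V=\varnothing$ or $\psi\circ\varphi^{-1}\colon\varphi(U\cap V)\to\psi(U\cap V)$ is a $C^k$-diffeomorphism; a $C^k$-atlas is a family of pairwise $C^k$-compatible charts covering $M$; two atlases are $C^k$-compatible if their union is a $C^k$-atlas. *)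

theory Defs
  imports "HOL-Analysis.Analysis" "HOL-Library.Extended_Nat"
begin

definition locally_euclidean1 :: "'a topology \<Rightarrow> bool" where
  "locally_euclidean1 M \<longleftrightarrow>
     (\<forall>x\<in>topspace M. \<exists>V W. openin M V \<and> x \<in> V \<and> open W \<and>
        subtopology M V homeomorphic_space subtopology euclideanreal W)"

definition Ck_on :: "enat \<Rightarrow> real set \<Rightarrow> (real \<Rightarrow> real) \<Rightarrow> bool" where
  "Ck_on k S f \<longleftrightarrow>
     (\<exists>D :: nat \<Rightarrow> real \<Rightarrow> real.
        (\<forall>x\<in>S. D 0 x = f x) \<and>
        (\<forall>j. enat j < k \<longrightarrow> (\<forall>x\<in>S. (D j has_real_derivative D (Suc j) x) (at x))) \<and>
        (\<forall>j. enat j \<le> k \<longrightarrow> continuous_on S (D j)))"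

definition Ck_diffeo :: "enat \<Rightarrow> real set \<Rightarrow> real set \<Rightarrow> (real \<Rightarrow> real) \<Rightarrow> bool" where
  "Ck_diffeo k S T f \<longleftrightarrow> bij_betw f S T \<and> Ck_on k S f \<and> Ck_on k T (inv_into S f)"

definition is_chart :: "'a topology \<Rightarrow> 'a set \<times> ('a \<Rightarrow> real) \<Rightarrow> bool" where
  "is_chart M c \<longleftrightarrow> (case c of (U, \<phi>) \<Rightarrow>
     openin M U \<and> open (\<phi> ` U) \<and>
     homeomorphic_map (subtopology M U) (subtopology euclideanreal (\<phi> ` U)) \<phi>)"

definition Ck_compatible_charts :: "enat \<Rightarrow> 'a set \<times> ('a \<Rightarrow> real) \<Rightarrow> 'a set \<times> ('a \<Rightarrow> real) \<Rightarrow> bool" where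
  "Ck_compatible_charts k c d \<longleftrightarrow> (case c of (U, \<phi>) \<Rightarrow> case d of (V, \<psi>) \<Rightarrow>
     U \<inter> V = {} \<or> Ck_diffeo k (\<phi> ` (U \<inter> V)) (\<psi> ` (U \<inter> V)) (\<psi> \<circ> inv_into U \<phi>))"

definition Ck_atlas :: "enat \<Rightarrow> 'a topology \<Rightarrow> ('a set \<times> ('a \<Rightarrow> real)) set \<Rightarrow> bool" where
  "Ck_atlas k M A \<longleftrightarrow>
     (\<forall>c\<in>A. is_chart M c) \<and>
     (\<forall>c\<in>A. \<forall>d\<in>A. Ck_compatible_charts k c d) \<and>
     \<Union> (fst ` A) = topspace M"

definition Ck_atlases_compatible :: "enat \<Rightarrow> 'a topology \<Rightarrow> ('a set \<times> ('a \<Rightarrow> real)) set \<Rightarrow> ('a set \<times> ('a \<Rightarrow> real)) set \<Rightarrow> bool" where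
  "Ck_atlases_compatible k M A B \<longleftrightarrow> Ck_atlas k M (A \<union> B)"

end

theory Submission
  imports Defs "HOL-Computational_Algebra.Polynomial"
begin

fun Cn :: "nat \<Rightarrow> real set \<Rightarrow> (real \<Rightarrow> real) \<Rightarrow> bool" where
  "Cn 0 S f = continuous_on S f"
| "Cn (Suc n) S f = ((\<forall>x\<in>S. f differentiable (at x)) \<and> Cn n S (deriv f))"

lemma Cn_cong:
  assumes "open S" "\<And>x. x \<in> S \<Longrightarrow> f x = g x" "Cn n S f"
  shows "Cn n S g"
  using assms
proof (induction n arbitrary: f g)
  case 0
  then show ?case using continuous_on_cong by force
next
  case (Suc n)
  have d: "g differentiable (at x)" if "x \<in> S" for x
  proof -
    have "(f has_real_derivative deriv f x) (at x)"
      using Suc.prems(3) that DERIV_deriv_iff_real_differentiable by auto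
    then have "(g has_real_derivative deriv f x) (at x)"
      using has_field_derivative_transform_within_open[OF _ Suc.prems(1) that] Suc.prems(2) by blast
    then show ?thesis using real_differentiable_def by blast
  qed
  have e: "deriv f x = deriv g x" if "x \<in> S" for x
    by (rule deriv_cong_ev) (use Suc.prems(1,2) that in \<open>auto simp: eventually_nhds\<close>)
  have "Cn n S (deriv g)"
    by (rule Suc.IH[of "deriv f"]) (use Suc.prems e in auto)
  then show ?case using d by simp
qed

lemma Cn_cont: "Cn n S f \<Longrightarrow> continuous_on S f"
proof (cases n)
  case 0
  then show "Cn n S f \<Longrightarrow> continuous_on S f" by simp
next
  case (Suc m)
  show "Cn n S f \<Longrightarrow> continuous_on S f"
  proof -
    assume "Cn n S f"
    then have "\<forall>x\<in>S. f differentiable (at x)" using Suc by simp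
    then show ?thesis
      by (meson continuous_at_imp_continuous_on differentiable_imp_continuous_within)
  qed
qed

lemma Cn_Suc_imp: "Cn (Suc n) S f \<Longrightarrow> Cn n S f"
proof (induction n arbitrary: f)
  case 0
  then show ?case using Cn_cont[of "Suc 0" S f] by simp
next
  case (Suc n)
  then show ?case by auto
qed

lemma Cn_mono: "m \<le> n \<Longrightarrow> Cn n S f \<Longrightarrow> Cn m S f"
  by (induction n rule: dec_induct) (auto dest: Cn_Suc_imp simp del: Cn.simps)


lemma Cn_subset: "open T \<Longrightarrow> T \<subseteq> S \<Longrightarrow> Cn n S f \<Longrightarrow> Cn n T f"
  by (induction n arbitrary: f) (auto intro: continuous_on_subset)

lemma Cn_local:
  assumes "open S" "\<And>x. x \<in> S \<Longrightarrow> \<exists>T. open T \<and> x \<in> T \<and> T \<subseteq> S \<and> Cn n T f"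
  shows "Cn n S f"
  using assms
proof (induction n arbitrary: f)
  case 0
  have "isCont f x" if "x \<in> S" for x
    using "0.prems"(2)[OF that] continuous_on_eq_continuous_at by auto
  then show ?case by (simp add: continuous_at_imp_continuous_on)
next
  case (Suc n)
  have "\<forall>x\<in>S. f differentiable (at x)"
    using Suc.prems(2) by fastforce
  moreover have "Cn n S (deriv f)"
    by (rule Suc.IH) (use Suc.prems in fastforce)+
  ultimately show ?case by simp
qed

lemma Cn_const: "Cn n S (\<lambda>x. c)"
proof (induction n arbitrary: c)
  case 0
  then show ?case by simp
next
  case (Suc n)
  have "deriv (\<lambda>x. c) = (\<lambda>x. 0)" by (rule ext) simp
  then show ?case using Suc by simp
qed

lemma Cn_id: "Cn n S (\<lambda>x. x)"
proof (cases n)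
  case 0
  then show ?thesis by (simp add: continuous_on_id)
next
  case (Suc m)
  have "deriv (\<lambda>x. x) = (\<lambda>x. 1)" by (rule ext) simp
  then show ?thesis using Suc Cn_const by simp
qed

lemma Cn_add:
  assumes "open S" "Cn n S f" "Cn n S g"
  shows "Cn n S (\<lambda>x. f x + g x)"
  using assms
proof (induction n arbitrary: f g)
  case 0
  then show ?case by (simp add: continuous_on_add)
next
  case (Suc n)
  have e: "deriv (\<lambda>x. f x + g x) x = deriv f x + deriv g x" if "x \<in> S" for x
    using Suc.prems that by (intro DERIV_imp_deriv DERIV_add) (auto simp: DERIV_deriv_iff_real_differentiable)
  have "Cn n S (\<lambda>x. deriv f x + deriv g x)"
    using Suc by auto
  then have "Cn n S (deriv (\<lambda>x. f x + g x))"
    by (rule Cn_cong[OF \<open>open S\<close>, rotated]) (simp add: e)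
  moreover have "\<forall>x\<in>S. (\<lambda>x. f x + g x) differentiable (at x)"
    using Suc.prems by auto
  ultimately show ?case by simp
qed

lemma Cn_mult:
  assumes "open S" "Cn n S f" "Cn n S g"
  shows "Cn n S (\<lambda>x. f x * g x)"
  using assms
proof (induction n arbitrary: f g)
  case 0
  then show ?case by (simp add: continuous_on_mult)
next
  case (Suc n)
  have e: "deriv (\<lambda>x. f x * g x) x = deriv f x * g x + f x * deriv g x" if "x \<in> S" for x
  proof -
    have "((\<lambda>x. f x * g x) has_real_derivative f x * deriv g x + deriv f x * g x) (at x)"
      using Suc.prems that by (intro DERIV_mult') (auto simp: DERIV_deriv_iff_real_differentiable)
    then show ?thesis by (simp add: DERIV_imp_deriv)
  qed
  have fn: "Cn n S f" "Cn n S g" using Suc.prems Cn_Suc_imp by blast+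
  have c1: "Cn n S (\<lambda>x. deriv f x * g x)"
    by (rule Suc.IH) (use Suc.prems fn in simp_all)
  have c2: "Cn n S (\<lambda>x. f x * deriv g x)"
    by (rule Suc.IH) (use Suc.prems fn in simp_all)
  have "Cn n S (\<lambda>x. deriv f x * g x + f x * deriv g x)"
    using Cn_add[OF \<open>open S\<close> c1 c2] .
  then have "Cn n S (deriv (\<lambda>x. f x * g x))"
    by (rule Cn_cong[OF \<open>open S\<close>, rotated]) (simp add: e)
  moreover have "\<forall>x\<in>S. (\<lambda>x. f x * g x) differentiable (at x)"
    using Suc.prems by auto
  ultimately show ?case by simp
qed

lemma Cn_cmult: "open S \<Longrightarrow> Cn n S f \<Longrightarrow> Cn n S (\<lambda>x. c * f x)"
  using Cn_mult[OF _ Cn_const] by blast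

lemma Cn_minus: "open S \<Longrightarrow> Cn n S f \<Longrightarrow> Cn n S (\<lambda>x. - f x)"
  using Cn_cmult[of S n f "-1"] by simp

lemma Cn_diff: "open S \<Longrightarrow> Cn n S f \<Longrightarrow> Cn n S g \<Longrightarrow> Cn n S (\<lambda>x. f x - g x)"
  using Cn_add[OF _ _ Cn_minus, of S n f g] by simp

lemma Cn_compose:
  assumes "open S" "open T" "Cn n T f" "Cn n S g" "g ` S \<subseteq> T"
  shows "Cn n S (\<lambda>x. f (g x))"
  using assms
proof (induction n arbitrary: f g)
  case 0
  then show ?case using continuous_on_compose2[of T f S g] by simp
next
  case (Suc n)
  have e: "deriv (\<lambda>x. f (g x)) x = deriv f (g x) * deriv g x" if "x \<in> S" for x
  proof -
    have "(f \<circ> g has_real_derivative deriv f (g x) * deriv g x) (at x)"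
      using Suc.prems that by (intro DERIV_chain) (auto simp: DERIV_deriv_iff_real_differentiable)
    then show ?thesis by (simp add: DERIV_imp_deriv o_def)
  qed
  have fn: "Cn n S g" using Suc.prems Cn_Suc_imp by blast
  have "Cn n S (\<lambda>x. deriv f (g x))"
    by (rule Suc.IH) (use Suc.prems fn in simp_all)
  then have "Cn n S (\<lambda>x. deriv f (g x) * deriv g x)"
    using Suc.prems by (intro Cn_mult) simp_all
  then have "Cn n S (deriv (\<lambda>x. f (g x)))"
    by (rule Cn_cong[OF \<open>open S\<close>, rotated]) (simp add: e)
  moreover have "\<forall>x\<in>S. (\<lambda>x. f (g x)) differentiable (at x)"
  proof
    fix x assume "x \<in> S"
    then have "(f \<circ> g) differentiable (at x)"
      using Suc.prems by (intro differentiable_chain_at) auto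
    then show "(\<lambda>x. f (g x)) differentiable (at x)" by (simp add: o_def)
  qed
  ultimately show ?case by simp
qed

lemma Cn_inverse: "Cn n (-{0}) inverse"
proof (induction n)
  case 0
  then show ?case by (simp add: continuous_on_inverse continuous_on_id)
next
  case (Suc n)
  have e: "deriv inverse x = - (inverse x * inverse x)" if "x \<in> -{0}" for x
    using that by (intro DERIV_imp_deriv) (auto intro!: derivative_eq_intros simp: power2_eq_square)
  have cc: "Cn n (-{0}) (\<lambda>x. - (inverse x * inverse x))"
    using Suc by (intro Cn_minus Cn_mult) auto
  have "Cn n (-{0}) (deriv inverse)"
  proof (rule Cn_cong[OF _ _ cc])
    show "open (-{0::real})" by auto
  qed (simp add: e power2_eq_square field_simps)
  moreover have "\<forall>x\<in>-{0::real}. inverse differentiable (at x)"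
  proof
    fix x :: real assume "x \<in> -{0}"
    then have "x \<noteq> 0" by auto
    then show "inverse differentiable (at x)"
      using DERIV_inverse[of x UNIV] real_differentiable_def by blast
  qed
  ultimately show ?case by simp
qed

lemma Cn_inverse_comp:
  assumes "open S" "Cn n S f" "\<And>x. x \<in> S \<Longrightarrow> f x \<noteq> 0"
  shows "Cn n S (\<lambda>x. inverse (f x))"
  using assms by (intro Cn_compose[OF _ _ Cn_inverse]) auto


lemma Cn_invfun:
  assumes "open S" "open T" "Cn n S f" "\<And>x. x \<in> S \<Longrightarrow> deriv f x \<noteq> 0"
    "\<And>y. y \<in> T \<Longrightarrow> g y \<in> S" "\<And>y. y \<in> T \<Longrightarrow> f (g y) = y" "continuous_on T g"
  shows "Cn n T g"
  using assms(3)
proof (induction n)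
  case 0
  then show ?case using assms(7) by simp
next
  case (Suc n)
  have gn: "Cn n T g" using Suc Cn_Suc_imp by blast
  have dg: "(g has_real_derivative inverse (deriv f (g y))) (at y)" if y: "y \<in> T" for y
  proof -
    obtain r where r: "r > 0" "ball y r \<subseteq> T" using assms(2) y open_contains_ball by blast
    show ?thesis
    proof (rule DERIV_inverse_function[where a = "y - r" and b = "y + r"])
      show "(f has_real_derivative deriv f (g y)) (at (g y))"
        using Suc.prems assms(5)[OF y] DERIV_deriv_iff_real_differentiable by auto
      show "deriv f (g y) \<noteq> 0" using assms(4,5) y by blast
      show "y - r < y" "y < y + r" using r by auto
      show "f (g z) = z" if "y - r < z" "z < y + r" for z
        using assms(6) r that by (auto simp: dist_real_def subset_iff)
      show "isCont g y" using assms(2,7) y continuous_on_eq_continuous_at by blast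
    qed
  qed
  have c1: "Cn n T (\<lambda>y. deriv f (g y))"
    by (rule Cn_compose[OF assms(2,1)]) (use Suc.prems gn assms(5) in auto)
  have c2: "Cn n T (\<lambda>y. inverse (deriv f (g y)))"
    by (rule Cn_inverse_comp[OF assms(2) c1]) (use assms(4,5) in auto)
  have "Cn n T (deriv g)"
    by (rule Cn_cong[OF assms(2) _ c2]) (use dg DERIV_imp_deriv in metis)
  moreover have "\<forall>y\<in>T. g differentiable (at y)"
    using dg real_differentiable_def by blast
  ultimately show ?case by simp
qed

lemma Cn_higher: "Cn n S f \<Longrightarrow> j \<le> n \<Longrightarrow> Cn (n - j) S ((deriv ^^ j) f)"
proof (induction j)
  case 0
  then show ?case by simp
next
  case (Suc j)
  then have "Cn (n - j) S ((deriv ^^ j) f)" by simp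
  moreover have "n - j = Suc (n - Suc j)" using Suc.prems by simp
  ultimately show ?case by simp
qed

lemma Cn_from_higher:
  assumes "\<And>j. j < m \<Longrightarrow> \<forall>x\<in>S. (deriv ^^ (i + j)) f differentiable (at x)"
    "continuous_on S ((deriv ^^ (i + m)) f)"
  shows "Cn m S ((deriv ^^ i) f)"
  using assms
proof (induction m arbitrary: i)
  case 0
  then show ?case by simp
next
  case (Suc m)
  have "Cn m S ((deriv ^^ (Suc i)) f)"
  proof (rule Suc.IH)
    show "\<forall>x\<in>S. (deriv ^^ (Suc i + j)) f differentiable (at x)" if "j < m" for j
      using Suc.prems(1)[of "Suc j"] that by simp
    show "continuous_on S ((deriv ^^ (Suc i + m)) f)"
      using Suc.prems(2) by simp
  qed
  moreover have "\<forall>x\<in>S. (deriv ^^ i) f differentiable (at x)"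
    using Suc.prems(1)[of 0] by simp
  ultimately show ?case by simp
qed

lemma Ck_on_iff:
  assumes "open S"
  shows "Ck_on k S f \<longleftrightarrow> (\<forall>n. enat n \<le> k \<longrightarrow> Cn n S f)"
proof
  assume "Ck_on k S f"
  then obtain D where D0: "\<forall>x\<in>S. D 0 x = f x"
    and Dd: "\<forall>j. enat j < k \<longrightarrow> (\<forall>x\<in>S. (D j has_real_derivative D (Suc j) x) (at x))"
    and Dc: "\<forall>j. enat j \<le> k \<longrightarrow> continuous_on S (D j)"
    unfolding Ck_on_def by blast
  have E: "enat j \<le> k \<Longrightarrow> x \<in> S \<Longrightarrow> D j x = (deriv ^^ j) f x" for j x
  proof (induction j arbitrary: x)
    case 0
    then show ?case using D0 by simp
  next
    case (Suc j)
    have jk: "enat j < k" using Suc.prems Suc_ile_eq by blast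
    have "((deriv ^^ j) f has_real_derivative D (Suc j) x) (at x)"
    proof (rule has_field_derivative_transform_within_open[OF _ assms Suc.prems(2)])
      show "(D j has_real_derivative D (Suc j) x) (at x)" using Dd jk Suc.prems(2) by blast
      show "D j y = (deriv ^^ j) f y" if "y \<in> S" for y
        using Suc.IH[OF _ that] jk by simp
    qed
    then show ?case by (simp add: DERIV_imp_deriv)
  qed
  show "\<forall>n. enat n \<le> k \<longrightarrow> Cn n S f"
  proof (intro allI impI)
    fix n assume nk: "enat n \<le> k"
    have "Cn n S ((deriv ^^ 0) f)"
    proof (rule Cn_from_higher)
      show "\<forall>x\<in>S. (deriv ^^ (0 + j)) f differentiable (at x)" if "j < n" for j
      proof
        fix x assume x: "x \<in> S"
        have jk: "enat j < k" using that nk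
          by (meson enat_ord_simps(2) order_less_le_trans)
        have "((deriv ^^ j) f has_real_derivative D (Suc j) x) (at x)"
        proof (rule has_field_derivative_transform_within_open[OF _ assms x])
          show "(D j has_real_derivative D (Suc j) x) (at x)" using Dd jk x by blast
          show "D j y = (deriv ^^ j) f y" if "y \<in> S" for y
            using E[OF _ that] jk by simp
        qed
        then show "(deriv ^^ (0 + j)) f differentiable (at x)"
          using real_differentiable_def by auto
      qed
      show "continuous_on S ((deriv ^^ (0 + n)) f)"
        using Dc nk E continuous_on_cong by fastforce
    qed
    then show "Cn n S f" by simp
  qed
next
  assume H: "\<forall>n. enat n \<le> k \<longrightarrow> Cn n S f"
  show "Ck_on k S f"
    unfolding Ck_on_def
  proof (intro exI[of _ "\<lambda>j. (deriv ^^ j) f"] conjI allI impI ballI)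
    show "(deriv ^^ 0) f x = f x" for x by simp
    fix j x assume jk: "enat j < k" and x: "x \<in> S"
    have "enat (Suc j) \<le> k" using jk Suc_ile_eq by blast
    then have "Cn (Suc j) S f" using H by blast
    then have "Cn (Suc j - j) S ((deriv ^^ j) f)" by (rule Cn_higher) simp
    then have "(deriv ^^ j) f differentiable (at x)" using x by simp
    then show "((deriv ^^ j) f has_real_derivative (deriv ^^ Suc j) f x) (at x)"
      using DERIV_deriv_iff_real_differentiable[of "(deriv ^^ j) f" x] by simp
  next
    fix j assume jk: "enat j \<le> k"
    have "Cn j S f" using H jk by blast
    then have "Cn (j - j) S ((deriv ^^ j) f)" by (rule Cn_higher) simp
    then show "continuous_on S ((deriv ^^ j) f)" by simp
  qed
qed

definition ep :: "real poly \<Rightarrow> real \<Rightarrow> real" where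
  "ep P x = (if x > 0 then poly P (inverse x) * exp (- inverse x) else 0)"

definition Qd :: "real poly \<Rightarrow> real poly" where
  "Qd P = [:0,0,1:] * (P - pderiv P)"

lemma poly_exp_lim: "((\<lambda>t::real. poly P t * exp (- t)) \<longlongrightarrow> 0) at_top"
proof -
  have e: "poly P t * exp (- t) = (\<Sum>i\<le>degree P. coeff P i * (t ^ i / exp t))" for t
    by (simp add: poly_altdef sum_distrib_right exp_minus divide_inverse mult.assoc)
  have "((\<lambda>t. \<Sum>i\<le>degree P. coeff P i * (t ^ i / exp t)) \<longlongrightarrow> (\<Sum>i\<le>degree P. coeff P i * 0)) at_top"
    by (intro tendsto_sum tendsto_mult tendsto_const tendsto_power_div_exp_0)
  then show ?thesis by (simp add: e)
qed

lemma ep_lim0: "(ep P \<longlongrightarrow> 0) (at_right 0)"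
proof -
  have "((\<lambda>x. poly P (inverse x) * exp (- inverse x)) \<longlongrightarrow> 0) (at_right 0)"
    using filterlim_compose[OF poly_exp_lim filterlim_inverse_at_top_right] .
  moreover have "\<forall>\<^sub>F x in at_right 0. poly P (inverse x) * exp (- inverse x) = ep P x"
    using eventually_at_right_less[of "0::real"] by eventually_elim (simp add: ep_def)
  ultimately show ?thesis using Lim_transform_eventually by blast
qed

lemma ep_deriv: "(ep P has_real_derivative ep (Qd P) x) (at x)"
proof (cases "x > 0")
  case True
  have d: "((\<lambda>x. poly P (inverse x) * exp (- inverse x)) has_real_derivative
       poly (pderiv P) (inverse x) * (- (inverse x ^ 2)) * exp (- inverse x)
       + poly P (inverse x) * (exp (- inverse x) * (inverse x ^ 2))) (at x)"
    using True
    by (auto intro!: derivative_eq_intros DERIV_chain2[OF poly_DERIV] simp: power2_eq_square)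
  have "ep (Qd P) x = poly (pderiv P) (inverse x) * (- (inverse x ^ 2)) * exp (- inverse x)
       + poly P (inverse x) * (exp (- inverse x) * (inverse x ^ 2))"
    using True by (simp add: ep_def Qd_def algebra_simps power2_eq_square)
  then have d2: "((\<lambda>x. poly P (inverse x) * exp (- inverse x)) has_real_derivative ep (Qd P) x) (at x)"
    using d by simp
  show ?thesis
    by (rule has_field_derivative_transform_within_open[OF d2, of "{0<..}"]) (use True in \<open>auto simp: ep_def\<close>)
next
  case False
  show ?thesis
  proof (cases "x < 0")
    case True
    have d2: "((\<lambda>x. 0) has_real_derivative ep (Qd P) x) (at x)"
      using True by (simp add: ep_def)
    show ?thesis
      by (rule has_field_derivative_transform_within_open[OF d2, of "{..<0}"]) (use True in \<open>auto simp: ep_def\<close>)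
  next
    case False
    with \<open>\<not> x > 0\<close> have x0: "x = 0" by auto
    have "((\<lambda>h. (ep P (0 + h) - ep P 0) / h) \<longlongrightarrow> 0) (at 0)"
      unfolding filterlim_at_split
    proof
      have "\<forall>\<^sub>F h in at_left 0. (ep P (0 + h) - ep P 0) / h = 0"
        by (rule eventually_at_leftI[of "-1"]) (auto simp: ep_def)
      then show "((\<lambda>h. (ep P (0 + h) - ep P 0) / h) \<longlongrightarrow> 0) (at_left 0)"
        by (rule tendsto_eventually)
    next
      have "\<forall>\<^sub>F h in at_right 0. ep ([:0,1:] * P) h = (ep P (0 + h) - ep P 0) / h"
        using eventually_at_right_less[of "0::real"] by eventually_elim (simp add: ep_def field_simps)
      then show "((\<lambda>h. (ep P (0 + h) - ep P 0) / h) \<longlongrightarrow> 0) (at_right 0)"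
        by (rule Lim_transform_eventually[OF ep_lim0])
    qed
    then have "(ep P has_real_derivative 0) (at 0)"
      by (simp add: has_field_derivative_iff)
    then show ?thesis using x0 by (simp add: ep_def)
  qed
qed

lemma ep_Cn: "Cn n S (ep P)"
proof (induction n arbitrary: P)
  case 0
  have "isCont (ep P) x" for x using ep_deriv DERIV_isCont by blast
  then show ?case by (simp add: continuous_at_imp_continuous_on)
next
  case (Suc n)
  have "deriv (ep P) = ep (Qd P)" using ep_deriv DERIV_imp_deriv by blast
  moreover have "\<forall>x\<in>S. ep P differentiable (at x)"
    using ep_deriv real_differentiable_def by blast
  ultimately show ?case using Suc.IH[of "Qd P"] by simp
qed


lemma ep1_pos: "x > 0 \<Longrightarrow> ep 1 x > 0" by (simp add: ep_def)
lemma ep1_nonpos: "x \<le> 0 \<Longrightarrow> ep 1 x = 0" by (simp add: ep_def)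
lemma ep1_nonneg: "ep 1 x \<ge> 0" by (simp add: ep_def)
lemma epQ1_pos: "x > 0 \<Longrightarrow> ep (Qd 1) x > 0" by (simp add: ep_def Qd_def)

definition beta :: "real \<Rightarrow> real" where
  "beta x = ep 1 x / (ep 1 x + ep 1 (1 - x))"

lemma beta_den_pos: "ep 1 x + ep 1 (1 - x) > 0"
proof (cases "x > 0")
  case True
  then show ?thesis using ep1_pos[of x] ep1_nonneg[of "1-x"] by linarith
next
  case False
  then show ?thesis using ep1_pos[of "1-x"] ep1_nonneg[of x] by linarith
qed

lemma beta_Cn: "open S \<Longrightarrow> Cn n S beta"
proof -
  assume S: "open S"
  have a: "Cn n UNIV (\<lambda>x. ep 1 (1 - x))"
    by (rule Cn_compose[OF open_UNIV open_UNIV ep_Cn Cn_diff[OF open_UNIV Cn_const Cn_id]]) simp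
  have b: "Cn n UNIV (\<lambda>x. ep 1 x + ep 1 (1 - x))"
    by (rule Cn_add[OF open_UNIV ep_Cn a])
  have c: "Cn n UNIV (\<lambda>x. ep 1 x * inverse (ep 1 x + ep 1 (1 - x)))"
    by (rule Cn_mult[OF open_UNIV ep_Cn Cn_inverse_comp[OF open_UNIV b]])
       (use beta_den_pos in \<open>auto simp: less_le\<close>)
  have "beta = (\<lambda>x. ep 1 x * inverse (ep 1 x + ep 1 (1 - x)))"
    by (rule ext) (simp add: beta_def divide_inverse)
  then show ?thesis using Cn_subset[OF S _ c] by simp
qed

lemma beta_0: "x \<le> 0 \<Longrightarrow> beta x = 0"
  by (simp add: beta_def ep1_nonpos)

lemma beta_1: "x \<ge> 1 \<Longrightarrow> beta x = 1"
proof -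
  assume "x \<ge> 1"
  then have "ep 1 (1 - x) = 0" "ep 1 x > 0" by (auto intro: ep1_nonpos ep1_pos)
  then show ?thesis by (simp add: beta_def)
qed

lemma beta_deriv_pos:
  assumes "0 < x" "x < 1"
  shows "\<exists>d>0. (beta has_real_derivative d) (at x)"
proof -
  let ?e = "ep 1" and ?e' = "ep (Qd 1)"
  let ?g = "\<lambda>x. ep 1 x + ep 1 (1 - x)"
  have d1: "((\<lambda>x. ep 1 (1 - x)) has_real_derivative ?e' (1 - x) * (-1)) (at x)"
    by (rule DERIV_chain2[OF ep_deriv]) (auto intro!: derivative_eq_intros)
  have dg: "(?g has_real_derivative ?e' x + ?e' (1 - x) * (-1)) (at x)"
    by (rule DERIV_add[OF ep_deriv d1])
  have gx: "?g x \<noteq> 0" using beta_den_pos[of x] by linarith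
  have db: "((\<lambda>x. ?e x / ?g x) has_real_derivative
      (?e' x * ?g x - ?e x * (?e' x + ?e' (1 - x) * (-1))) / (?g x * ?g x)) (at x)"
    by (rule DERIV_divide[OF ep_deriv dg gx])
  have num: "?e' x * ?g x - ?e x * (?e' x + ?e' (1 - x) * (-1)) = ?e' x * ?e (1 - x) + ?e x * ?e' (1 - x)"
    by (simp add: algebra_simps)
  have pos: "?e' x * ?e (1 - x) + ?e x * ?e' (1 - x) > 0"
    using assms ep1_pos epQ1_pos by (intro add_pos_pos mult_pos_pos) auto
  have "(?e' x * ?g x - ?e x * (?e' x + ?e' (1 - x) * (-1))) / (?g x * ?g x) > 0"
    unfolding num using pos beta_den_pos[of x] by (intro divide_pos_pos mult_pos_pos) auto
  moreover have "beta = (\<lambda>x. ?e x / ?g x)" by (rule ext) (simp add: beta_def)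
  ultimately show ?thesis using db by auto
qed

lemma beta_cont: "continuous_on S beta"
  using beta_Cn[OF open_UNIV, of 0] continuous_on_subset by auto

lemma beta_strict:
  assumes "0 \<le> a" "a < b" "b \<le> 1"
  shows "beta a < beta b"
proof (rule DERIV_pos_imp_increasing_open[OF assms(2)])
  show "\<exists>y. (beta has_real_derivative y) (at x) \<and> 0 < y" if "a < x" "x < b" for x
    using beta_deriv_pos[of x] that assms by auto
  show "continuous_on {a..b} beta" by (rule beta_cont)
qed

lemma beta_clamp: "beta x = beta (max 0 (min 1 x))"
  by (cases "x \<le> 0"; cases "x \<ge> 1") (auto simp: beta_0 beta_1 max_def min_def)

lemma beta_mono01: "0 \<le> u \<Longrightarrow> u \<le> v \<Longrightarrow> v \<le> 1 \<Longrightarrow> beta u \<le> beta v"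
  using beta_strict[of u v] by (cases "u = v") auto

lemma beta_mono: "a \<le> b \<Longrightarrow> beta a \<le> beta b"
proof -
  assume ab: "a \<le> b"
  let ?a = "max 0 (min 1 a)" and ?b = "max 0 (min 1 b)"
  have "?a \<le> ?b" using ab by auto
  moreover have "0 \<le> ?a" "?b \<le> 1" by auto
  ultimately have "beta ?a \<le> beta ?b"
    using beta_mono01 by blast
  then show ?thesis using beta_clamp[of a] beta_clamp[of b] by simp
qed

definition Ck :: "enat \<Rightarrow> real set \<Rightarrow> (real \<Rightarrow> real) \<Rightarrow> bool" where
  "Ck k S f \<longleftrightarrow> (\<forall>n. enat n \<le> k \<longrightarrow> Cn n S f)"

lemma Ck_cong: "open S \<Longrightarrow> (\<And>x. x \<in> S \<Longrightarrow> f x = g x) \<Longrightarrow> Ck k S f \<Longrightarrow> Ck k S g"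
  unfolding Ck_def using Cn_cong by blast

lemma Ck_subset: "open T \<Longrightarrow> T \<subseteq> S \<Longrightarrow> Ck k S f \<Longrightarrow> Ck k T f"
  unfolding Ck_def using Cn_subset by blast

lemma Ck_local:
  assumes "open S" "\<And>x. x \<in> S \<Longrightarrow> \<exists>T. open T \<and> x \<in> T \<and> T \<subseteq> S \<and> Ck k T f"
  shows "Ck k S f"
  unfolding Ck_def
proof (intro allI impI)
  fix n assume "enat n \<le> k"
  then show "Cn n S f"
    using assms(2)[unfolded Ck_def] \<open>enat n \<le> k\<close> by (intro Cn_local[OF assms(1)]) blast
qed

lemma Ck_const: "Ck k S (\<lambda>x. c)" unfolding Ck_def using Cn_const by blast
lemma Ck_id: "Ck k S (\<lambda>x. x)" unfolding Ck_def using Cn_id by blast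
lemma Ck_add: "open S \<Longrightarrow> Ck k S f \<Longrightarrow> Ck k S g \<Longrightarrow> Ck k S (\<lambda>x. f x + g x)"
  unfolding Ck_def using Cn_add by blast
lemma Ck_diff: "open S \<Longrightarrow> Ck k S f \<Longrightarrow> Ck k S g \<Longrightarrow> Ck k S (\<lambda>x. f x - g x)"
  unfolding Ck_def using Cn_diff by blast
lemma Ck_mult: "open S \<Longrightarrow> Ck k S f \<Longrightarrow> Ck k S g \<Longrightarrow> Ck k S (\<lambda>x. f x * g x)"
  unfolding Ck_def using Cn_mult by blast
lemma Ck_compose: "open S \<Longrightarrow> open T \<Longrightarrow> Ck k T f \<Longrightarrow> Ck k S g \<Longrightarrow> g ` S \<subseteq> T \<Longrightarrow> Ck k S (\<lambda>x. f (g x))"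
  unfolding Ck_def using Cn_compose by blast
lemma Ck_beta: "open S \<Longrightarrow> Ck k S beta"
  unfolding Ck_def using beta_Cn by blast
lemma Ck_sum:
  assumes "open S" "finite I" "\<And>i. i \<in> I \<Longrightarrow> Ck k S (f i)"
  shows "Ck k S (\<lambda>x. \<Sum>i\<in>I. f i x)"
  using assms(2,3)
proof (induction I rule: finite_induct)
  case empty
  then show ?case by (simp add: Ck_const)
next
  case (insert i I)
  have "Ck k S (\<lambda>x. f i x + (\<Sum>i\<in>I. f i x))"
    by (rule Ck_add[OF assms(1)]) (use insert in auto)
  then show ?case using insert.hyps by simp
qed

lemma Ck_invfun:
  assumes "open S" "open T" "Ck k S f" "\<And>x. x \<in> S \<Longrightarrow> deriv f x \<noteq> 0"
    "\<And>y. y \<in> T \<Longrightarrow> g y \<in> S" "\<And>y. y \<in> T \<Longrightarrow> f (g y) = y" "continuous_on T g"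
  shows "Ck k T g"
  using assms Cn_invfun unfolding Ck_def by metis

lemma Ck_differentiable: "k \<ge> 1 \<Longrightarrow> Ck k S f \<Longrightarrow> x \<in> S \<Longrightarrow> (f has_real_derivative deriv f x) (at x)"
  unfolding Ck_def
  by (metis Cn.simps(2) DERIV_deriv_iff_real_differentiable one_enat_def One_nat_def)

lemma Ck_cont: "Ck k S f \<Longrightarrow> continuous_on S f"
  unfolding Ck_def using Cn.simps(1) zero_le by (metis zero_enat_def)

lemma Ck_on_Ck: "open S \<Longrightarrow> Ck_on k S f \<longleftrightarrow> Ck k S f"
  unfolding Ck_def using Ck_on_iff by blast

lemma inj_cont_incr:
  fixes q :: "real \<Rightarrow> real"
  assumes I: "convex I" and c: "continuous_on I q" and inj: "inj_on q I"
    and u: "u \<in> I" "v \<in> I" "u < v" "q u < q v"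
    and x: "x \<in> I" "y \<in> I" "x < y"
  shows "q x < q y"
proof (rule ccontr)
  assume "\<not> q x < q y"
  define p where "p t = q ((1 - t) * v + t * y) - q ((1 - t) * u + t * x)" for t
  have mem: "(1 - t) * a + t * b \<in> I" if "a \<in> I" "b \<in> I" "0 \<le> t" "t \<le> 1" for a b t
    using convexD[OF I that(1,2), of "1 - t" t] that by simp
  have "continuous_on {0..1} p"
    unfolding p_def
    by (intro continuous_intros continuous_on_compose2[OF c]) (auto intro: mem u x)
  moreover have "p 1 \<le> 0" using \<open>\<not> q x < q y\<close> by (simp add: p_def)
  moreover have "0 \<le> p 0" using u by (simp add: p_def)
  ultimately obtain t where t: "0 \<le> t" "t \<le> 1" "p t = 0"
    using IVT2'[of p 1 0 0] by auto
  have lt: "(1 - t) * u + t * x < (1 - t) * v + t * y"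
  proof (cases "t = 0")
    case True then show ?thesis using u by simp
  next
    case False
    then have "t * x < t * y" using t x by simp
    moreover have "(1 - t) * u \<le> (1 - t) * v" using t u by (intro mult_left_mono) auto
    ultimately show ?thesis by linarith
  qed
  have "q ((1 - t) * v + t * y) = q ((1 - t) * u + t * x)" using t by (simp add: p_def)
  then have "(1 - t) * v + t * y = (1 - t) * u + t * x"
    using inj mem u x t by (meson inj_onD)
  then show False using lt by simp
qed

lemma deriv_sign_compat:
  fixes p :: "real \<Rightarrow> real"
  assumes "mono T1" "mono T2"
    and d1: "((\<lambda>z. T1 (p z)) has_real_derivative d1) (at y)"
    and d2: "((\<lambda>z. T2 (p z)) has_real_derivative d2) (at y)"
    and "d1 > 0"
  shows "d2 \<ge> 0"
proof (rule ccontr)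
  assume "\<not> d2 \<ge> 0"
  then have "d2 < 0" by simp
  obtain e1 where e1: "e1 > 0" "\<And>h. h > 0 \<Longrightarrow> h < e1 \<Longrightarrow> T1 (p y) < T1 (p (y + h))"
    using DERIV_pos_inc_right[OF d1 \<open>d1 > 0\<close>] by auto
  obtain e2 where e2: "e2 > 0" "\<And>h. h > 0 \<Longrightarrow> h < e2 \<Longrightarrow> T2 (p y) > T2 (p (y + h))"
    using DERIV_neg_dec_right[OF d2 \<open>d2 < 0\<close>] by auto
  define h where "h = min e1 e2 / 2"
  have h: "h > 0" "h < e1" "h < e2" using e1 e2 by (auto simp: h_def)
  have "p y < p (y + h)"
    using e1(2)[OF h(1,2)] assms(1) by (metis monoD not_le order_less_imp_le not_less)
  moreover have "p (y + h) < p y"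
    using e2(2)[OF h(1,3)] assms(2) by (metis monoD not_le order_less_imp_le not_less)
  ultimately show False by simp
qed

lemma deriv_sign_compat':
  fixes p :: "real \<Rightarrow> real"
  assumes "mono T1" "mono T2"
    and d1: "((\<lambda>z. T1 (p z)) has_real_derivative d1) (at y)"
    and d2: "((\<lambda>z. T2 (p z)) has_real_derivative d2) (at y)"
    and "d1 < 0"
  shows "d2 \<le> 0"
proof (rule ccontr)
  assume "\<not> d2 \<le> 0"
  then have "d2 > 0" by simp
  then show False using deriv_sign_compat[OF assms(2,1) d2 d1] \<open>d1 < 0\<close> by simp
qed

lemma isCont_local:
  "open W \<Longrightarrow> x \<in> W \<Longrightarrow> continuous_on W h \<Longrightarrow> (\<And>z. z \<in> W \<Longrightarrow> T z = h z) \<Longrightarrow> isCont T x"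
  by (metis continuous_on_cong continuous_on_eq_continuous_at)

locale Rstr =
  fixes k :: enat and C :: "(real set \<times> (real \<Rightarrow> real)) set"
  assumes k1: "1 \<le> k"
    and chart: "\<And>V g. (V, g) \<in> C \<Longrightarrow> open V \<and> continuous_on V g \<and> inj_on g V"
    and cover: "\<And>x. \<exists>(V, g)\<in>C. x \<in> V"
    and compat: "\<And>V1 g1 V2 g2. (V1, g1) \<in> C \<Longrightarrow> (V2, g2) \<in> C \<Longrightarrow>
        Ck k (g1 ` (V1 \<inter> V2)) (\<lambda>y. g2 (inv_into V1 g1 y))"
begin

lemma open_img: "(V, g) \<in> C \<Longrightarrow> open W \<Longrightarrow> W \<subseteq> V \<Longrightarrow> open (g ` W)"
proof -
  assume a: "(V, g) \<in> C" "open W" "W \<subseteq> V"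
  have "continuous_on W g" using chart[OF a(1)] a(3) continuous_on_subset by blast
  moreover have "inj_on g W" using chart[OF a(1)] a(3) inj_on_subset by blast
  ultimately show "open (g ` W)" using invariance_of_domain a(2) by blast
qed

lemma open_img2: "(V, g) \<in> C \<Longrightarrow> open X \<Longrightarrow> open (g ` (V \<inter> X))"
proof -
  assume a: "(V, g) \<in> C" "open X"
  have "open V" using chart[OF a(1)] by blast
  then show ?thesis using open_img[OF a(1), of "V \<inter> X"] a(2) by blast
qed

lemma open_img3: "(V, g) \<in> C \<Longrightarrow> open (g ` V)"
  using open_img2[of V g UNIV] by simp

lemma inv_mem:
  assumes "(V, g) \<in> C" "y \<in> g ` (V \<inter> X)"
  shows "inv_into V g y \<in> V \<inter> X" "g (inv_into V g y) = y"
proof -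
  obtain w where w: "w \<in> V \<inter> X" "y = g w" using assms(2) by blast
  have inj: "inj_on g V" using chart[OF assms(1)] by blast
  have "inv_into V g y = w" using w inv_into_f_f[OF inj] by blast
  then show "inv_into V g y \<in> V \<inter> X" using w by simp
  show "g (inv_into V g y) = y" using \<open>inv_into V g y = w\<close> w by simp
qed

lemma inv_cont: "(V, g) \<in> C \<Longrightarrow> continuous_on (g ` V) (inv_into V g)"
proof -
  assume a: "(V, g) \<in> C"
  have h: "open V" "continuous_on V g" "inj_on g V" using chart[OF a] by auto
  show ?thesis by (rule continuous_on_inverse_open[OF h(1,2)]) (use h(3) in auto)
qed

lemma tau_deriv:
  assumes c1: "(V1, g1) \<in> C" and c2: "(V2, g2) \<in> C" and y: "y \<in> g1 ` (V1 \<inter> V2)"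
  shows "((\<lambda>y. g2 (inv_into V1 g1 y)) has_real_derivative deriv (\<lambda>y. g2 (inv_into V1 g1 y)) y) (at y)"
    "deriv (\<lambda>y. g2 (inv_into V1 g1 y)) y \<noteq> 0"
proof -
  let ?t = "\<lambda>y. g2 (inv_into V1 g1 y)" and ?s = "\<lambda>z. g1 (inv_into V2 g2 z)"
  have o1: "open (g1 ` (V1 \<inter> V2))" using chart[OF c2] open_img2[OF c1] by blast
  have o2: "open (g2 ` (V2 \<inter> V1))" using chart[OF c1] open_img2[OF c2] by blast
  show dt: "(?t has_real_derivative deriv ?t y) (at y)"
    by (rule Ck_differentiable[OF k1 compat[OF c1 c2] y])
  have ty: "?t y \<in> g2 ` (V2 \<inter> V1)"
    using inv_mem(1)[OF c1 y] by auto
  have ds: "(?s has_real_derivative deriv ?s (?t y)) (at (?t y))"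
    by (rule Ck_differentiable[OF k1 compat[OF c2 c1] ty])
  have comp: "((\<lambda>z. ?s (?t z)) has_real_derivative deriv ?s (?t y) * deriv ?t y) (at y)"
    by (rule DERIV_chain2[OF ds dt])
  have idd: "?s (?t z) = z" if zz: "z \<in> g1 ` (V1 \<inter> V2)" for z
  proof -
    obtain w where w: "w \<in> V1 \<inter> V2" "z = g1 w" using zz by blast
    have i1: "inj_on g1 V1" and i2: "inj_on g2 V2" using chart[OF c1] chart[OF c2] by blast+
    have "inv_into V1 g1 z = w" using w inv_into_f_f[OF i1] by blast
    moreover have "inv_into V2 g2 (g2 w) = w" using w inv_into_f_f[OF i2] by blast
    ultimately show ?thesis using w by simp
  qed
  have "((\<lambda>z. ?s (?t z)) has_real_derivative 1) (at y)"
    by (rule has_field_derivative_transform_within_open[OF DERIV_ident o1 y]) (use idd in auto)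
  then have "deriv ?s (?t y) * deriv ?t y = 1" using comp DERIV_unique by blast
  then show "deriv ?t y \<noteq> 0" by auto
qed

definition good_bump :: "real \<Rightarrow> real \<Rightarrow> (real \<Rightarrow> real) \<Rightarrow> bool" where
  "good_bump c \<rho> T \<longleftrightarrow> (\<forall>x. x \<le> c - \<rho> \<longrightarrow> T x = 0) \<and> (\<forall>x. x \<ge> c + \<rho> \<longrightarrow> T x = 1) \<and>
     mono T \<and> continuous_on UNIV T \<and> (\<forall>x\<in>{c-\<rho><..<c+\<rho>}. \<forall>y>x. T x < T y) \<and>
     (\<forall>(V', g')\<in>C. Ck k (g' ` V') (\<lambda>y. T (inv_into V' g' y))) \<and>
     (\<forall>(V', g')\<in>C. \<forall>y\<in>g' ` V'. inv_into V' g' y \<in> {c-\<rho><..<c+\<rho>} \<longrightarrow>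
         deriv (\<lambda>y. T (inv_into V' g' y)) y \<noteq> 0)"

lemma beta_range: "0 \<le> beta s" "beta s \<le> 1"
  using beta_mono[of "min s 0" s] beta_mono[of s "max s 1"] beta_0[of "min s 0"] beta_1[of "max s 1"]
  by auto

lemma bump_exists:
  assumes Vg: "(V, g) \<in> C" and B: "ball c \<delta> \<subseteq> V" and \<rho>: "0 < \<rho>" "\<rho> < \<delta>"
  shows "\<exists>T. good_bump c \<rho> T"
proof -
  let ?B = "ball c \<delta>"
  have memB: "x \<in> ?B \<longleftrightarrow> c - \<delta> < x \<and> x < c + \<delta>" for x
    by (auto simp: dist_real_def)
  have cm: "c - \<rho> \<in> ?B" "c + \<rho> \<in> ?B" using \<rho> memB by auto
  define a where "a = g (c - \<rho>)"
  define b where "b = g (c + \<rho>)"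
  have ab: "a \<noteq> b"
  proof
    assume "a = b"
    then have "c - \<rho> = c + \<rho>"
      using inj_onD[of g V "c - \<rho>" "c + \<rho>"] chart[OF Vg] cm B unfolding a_def b_def by blast
    then show False using \<rho> by simp
  qed
  define r where "r = inverse (b - a)"
  have r: "r \<noteq> 0" using ab by (simp add: r_def)
  define q where "q x = (g x - a) * r" for x
  have qcont: "continuous_on ?B q"
  proof -
    have "continuous_on ?B g" using chart[OF Vg] B continuous_on_subset by blast
    then show ?thesis unfolding q_def by (intro continuous_intros)
  qed
  have qinj: "inj_on q ?B"
  proof (rule inj_onI)
    fix x y assume xy: "x \<in> ?B" "y \<in> ?B" "q x = q y"
    then have "g x = g y" using r by (simp add: q_def)
    then show "x = y" using inj_onD[of g V x y] chart[OF Vg] B xy by blast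
  qed
  have q0: "q (c - \<rho>) = 0" and q1: "q (c + \<rho>) = 1"
    using ab by (auto simp: q_def a_def b_def r_def)
  have qinc: "q x < q y" if "x \<in> ?B" "y \<in> ?B" "x < y" for x y
    by (rule inj_cont_incr[OF convex_ball qcont qinj cm(1) cm(2) _ _ that]) (use \<rho> q0 q1 in auto)
  have qle: "q x \<le> q y" if "x \<in> ?B" "y \<in> ?B" "x \<le> y" for x y
    using qinc[OF that(1,2)] that(3) by (cases "x = y") auto
  define T where "T x = (if x \<in> ?B then beta (q x) else if x < c then 0 else 1)" for x
  have T0: "T x = 0" if "x \<le> c - \<rho>" for x
  proof (cases "x \<in> ?B")
    case True
    then have "q x \<le> 0" using qle[OF True cm(1) that] q0 by simp
    then show ?thesis using True by (simp add: T_def beta_0)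
  next
    case False
    then show ?thesis using that \<rho> by (simp add: T_def)
  qed
  have T1: "T x = 1" if "x \<ge> c + \<rho>" for x
  proof (cases "x \<in> ?B")
    case True
    then have "q x \<ge> 1" using qle[OF cm(2) True that] q1 by simp
    then show ?thesis using True by (simp add: T_def beta_1)
  next
    case False
    then show ?thesis using that \<rho> by (simp add: T_def)
  qed
  have Tr: "0 \<le> T x" "T x \<le> 1" for x
    using beta_range by (auto simp: T_def)
  have Tmono: "mono T"
  proof (rule monoI)
    fix x y :: real assume xy: "x \<le> y"
    show "T x \<le> T y"
    proof (cases "x \<in> ?B \<and> y \<in> ?B")
      case True
      then show ?thesis using qle[of x y] xy beta_mono by (simp add: T_def)
    next
      case False
      then consider "x \<notin> ?B" "x < c" | "x \<notin> ?B" "x \<ge> c" | "y \<notin> ?B" "y \<ge> c" | "y \<notin> ?B" "y < c"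
        by linarith
      then show ?thesis
      proof cases
        case 1
        then show ?thesis using Tr[of y] by (simp add: T_def)
      next
        case 2
        then have "x \<ge> c + \<rho>" "y \<ge> c + \<rho>" using memB \<rho> xy by auto
        then show ?thesis using T1 by simp
      next
        case 3
        then show ?thesis using Tr[of x] by (simp add: T_def)
      next
        case 4
        then have "x \<le> c - \<rho>" "y \<le> c - \<rho>" using memB \<rho> xy by auto
        then show ?thesis using T0 by simp
      qed
    qed
  qed
  have Tstrict: "T x < T y" if x: "x \<in> {c-\<rho><..<c+\<rho>}" and xy: "y > x" for x y
  proof -
    have xB: "x \<in> ?B" using x memB \<rho> by auto
    have qx: "0 < q x" "q x < 1"
      using qinc[OF cm(1) xB] qinc[OF xB cm(2)] x q0 q1 by auto
    show ?thesis
    proof (cases "y \<ge> c + \<rho>")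
      case True
      then have "T y = 1" using T1 by simp
      moreover have "beta (q x) < beta 1" using beta_strict[of "q x" 1] qx by simp
      ultimately show ?thesis using xB beta_1[of 1] by (simp add: T_def)
    next
      case False
      then have yB: "y \<in> ?B" using xy x memB \<rho> by auto
      have "q x < q y" "q y < 1" using qinc[OF xB yB xy] qinc[OF yB cm(2)] False q1 by auto
      then have "beta (q x) < beta (q y)" using beta_strict qx by simp
      then show ?thesis using xB yB by (simp add: T_def)
    qed
  qed
  have Tcont: "continuous_on UNIV T"
  proof (intro continuous_at_imp_continuous_on ballI)
    fix x :: real
    have cb: "continuous_on ?B (\<lambda>z. beta (q z))"
      by (rule continuous_on_compose2[OF beta_cont[of UNIV] qcont]) auto
    consider "x \<in> ?B" | "x < c - \<rho>" | "x > c + \<rho>" using memB \<rho> by fastforce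
    then show "isCont T x"
    proof cases
      case 1
      then show ?thesis by (rule isCont_local[OF open_ball _ cb]) (simp add: T_def)
    next
      case 2
      show ?thesis
        by (rule isCont_local[OF open_lessThan[of "c - \<rho>"] _ continuous_on_const[of _ 0]]) (use 2 T0 in auto)
    next
      case 3
      show ?thesis
        by (rule isCont_local[OF open_greaterThan[of "c + \<rho>"] _ continuous_on_const[of _ 1]]) (use 3 T1 in auto)
    qed
  qed
  have Tck: "Ck k (g' ` V') (\<lambda>y. T (inv_into V' g' y))" if Vg': "(V', g') \<in> C" for V' g'
  proof (rule Ck_local)
    show "open (g' ` V')" using open_img3[OF Vg'] .
    fix y assume y: "y \<in> g' ` V'"
    define x where "x = inv_into V' g' y"
    have yy: "y \<in> g' ` (V' \<inter> UNIV)" using y by simp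
    have xV: "x \<in> V'" and gx: "g' x = y" using inv_mem[OF Vg' yy] unfolding x_def by auto
    consider "x \<in> ?B" | "x < c - \<rho>" | "x > c + \<rho>" using memB \<rho> by fastforce
    then show "\<exists>W. open W \<and> y \<in> W \<and> W \<subseteq> g' ` V' \<and> Ck k W (\<lambda>y. T (inv_into V' g' y))"
    proof cases
      case 1
      let ?W = "g' ` (V' \<inter> ?B)"
      have oW: "open ?W" using open_img2[OF Vg' open_ball] .
      have yW: "y \<in> ?W" using 1 xV gx by auto
      have WV: "?W \<subseteq> g' ` (V' \<inter> V)" using B by auto
      have oWV: "open (g' ` (V' \<inter> V))" using open_img2[OF Vg'] chart[OF Vg] by blast
      have ct: "Ck k (g' ` (V' \<inter> V)) (\<lambda>z. (g (inv_into V' g' z) - a) * r)"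
        by (intro Ck_mult Ck_diff compat[OF Vg' Vg] Ck_const oWV)
      have cb: "Ck k (g' ` (V' \<inter> V)) (\<lambda>z. beta ((g (inv_into V' g' z) - a) * r))"
        by (rule Ck_compose[OF oWV open_UNIV Ck_beta[OF open_UNIV] ct]) simp
      have cW: "Ck k ?W (\<lambda>z. beta ((g (inv_into V' g' z) - a) * r))"
        by (rule Ck_subset[OF oW WV cb])
      have "Ck k ?W (\<lambda>y. T (inv_into V' g' y))"
      proof (rule Ck_cong[OF oW _ cW])
        fix z assume z: "z \<in> ?W"
        have "inv_into V' g' z \<in> V' \<inter> ?B" by (rule inv_mem(1)[OF Vg' z])
        then show "beta ((g (inv_into V' g' z) - a) * r) = T (inv_into V' g' z)"
          by (simp add: T_def q_def)
      qed
      moreover have "?W \<subseteq> g' ` V'" by (rule image_mono) simp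
      ultimately show ?thesis using oW yW by (intro exI[of _ ?W]) simp
    next
      case 2
      let ?W = "g' ` (V' \<inter> {..<c - \<rho>})"
      have oW: "open ?W" using open_img2[OF Vg' open_lessThan] .
      have yW: "y \<in> ?W" using 2 xV gx by auto
      have "Ck k ?W (\<lambda>y. T (inv_into V' g' y))"
      proof (rule Ck_cong[OF oW _ Ck_const[of k ?W 0]])
        fix z assume "z \<in> ?W"
        then have "inv_into V' g' z \<in> V' \<inter> {..<c - \<rho>}" by (rule inv_mem(1)[OF Vg'])
        then have "inv_into V' g' z \<le> c - \<rho>" by simp
        then show "0 = T (inv_into V' g' z)" using T0[of "inv_into V' g' z"] by simp
      qed
      moreover have "?W \<subseteq> g' ` V'" by (rule image_mono) simp
      ultimately show ?thesis using oW yW by (intro exI[of _ ?W]) simp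
    next
      case 3
      let ?W = "g' ` (V' \<inter> {c + \<rho><..})"
      have oW: "open ?W" using open_img2[OF Vg' open_greaterThan] .
      have yW: "y \<in> ?W" using 3 xV gx by auto
      have "Ck k ?W (\<lambda>y. T (inv_into V' g' y))"
      proof (rule Ck_cong[OF oW _ Ck_const[of k ?W 1]])
        fix z assume "z \<in> ?W"
        then have "inv_into V' g' z \<in> V' \<inter> {c + \<rho><..}" by (rule inv_mem(1)[OF Vg'])
        then have "inv_into V' g' z \<ge> c + \<rho>" by simp
        then show "1 = T (inv_into V' g' z)" using T1[of "inv_into V' g' z"] by simp
      qed
      moreover have "?W \<subseteq> g' ` V'" by (rule image_mono) simp
      ultimately show ?thesis using oW yW by (intro exI[of _ ?W]) simp
    qed
  qed
  have Tder: "deriv (\<lambda>y. T (inv_into V' g' y)) y \<noteq> 0"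
    if Vg': "(V', g') \<in> C" and y: "y \<in> g' ` V'" and xr: "inv_into V' g' y \<in> {c-\<rho><..<c+\<rho>}" for V' g' y
  proof -
    define x where "x = inv_into V' g' y"
    have yy: "y \<in> g' ` (V' \<inter> UNIV)" using y by simp
    have xV: "x \<in> V'" and gx: "g' x = y" using inv_mem[OF Vg' yy] unfolding x_def by auto
    have xB: "x \<in> ?B" using xr memB \<rho> by (auto simp: x_def)
    let ?W = "g' ` (V' \<inter> ?B)"
    have oW: "open ?W" using open_img2[OF Vg' open_ball] .
    have yW: "y \<in> ?W" using xB xV gx by auto
    have yVV: "y \<in> g' ` (V' \<inter> V)" using yW B by auto
    let ?t = "\<lambda>z. g (inv_into V' g' z)"
    have dt: "(?t has_real_derivative deriv ?t y) (at y)" "deriv ?t y \<noteq> 0"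
      using tau_deriv[OF Vg' Vg yVV] by auto
    have tq: "(?t y - a) * r = q x" by (simp add: q_def x_def)
    have qx: "0 < q x" "q x < 1"
      using qinc[OF cm(1) xB] qinc[OF xB cm(2)] xr q0 q1 by (auto simp: x_def)
    obtain db where db: "db > 0" "(beta has_real_derivative db) (at (q x))"
      using beta_deriv_pos[OF qx] by auto
    have d1: "((\<lambda>z. (?t z - a) * r) has_real_derivative deriv ?t y * r) (at y)"
      using dt(1) by (auto intro!: derivative_eq_intros)
    have dH: "((\<lambda>z. beta ((?t z - a) * r)) has_real_derivative db * (deriv ?t y * r)) (at y)"
      using DERIV_chain2[OF db(2)[folded tq] d1] .
    have ev: "\<forall>\<^sub>F z in nhds y. T (inv_into V' g' z) = beta ((?t z - a) * r)"
    proof (rule eventually_nhds_in_open[OF oW yW, THEN eventually_mono])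
      fix z assume "z \<in> ?W"
      then show "T (inv_into V' g' z) = beta ((?t z - a) * r)"
        using inv_mem(1)[OF Vg' \<open>z \<in> ?W\<close>] by (simp add: T_def q_def)
    qed
    have "deriv (\<lambda>y. T (inv_into V' g' y)) y = deriv (\<lambda>z. beta ((?t z - a) * r)) y"
      by (rule deriv_cong_ev[OF ev refl])
    also have "\<dots> = db * (deriv ?t y * r)" by (rule DERIV_imp_deriv[OF dH])
    finally show ?thesis using db(1) dt(2) r by simp
  qed
  have "good_bump c \<rho> T"
    unfolding good_bump_def
  proof (intro conjI)
    show "\<forall>(V', g')\<in>C. Ck k (g' ` V') (\<lambda>y. T (inv_into V' g' y))"
      using Tck by (simp add: case_prod_beta)
    show "\<forall>(V', g')\<in>C. \<forall>y\<in>g' ` V'. inv_into V' g' y \<in> {c-\<rho><..<c+\<rho>} \<longrightarrow>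
         deriv (\<lambda>y. T (inv_into V' g' y)) y \<noteq> 0"
      using Tder by (simp add: case_prod_beta)
  qed (use T0 T1 Tmono Tcont Tstrict in auto)
  then show ?thesis by blast
qed

end

context Rstr
begin

lemma leb: "\<exists>\<delta>>0. \<forall>x\<in>{real_of_int n..real_of_int n + 1}. \<exists>(V, g)\<in>C. ball x \<delta> \<subseteq> V"
proof -
  have sub: "{real_of_int n..real_of_int n + 1} \<subseteq> \<Union> (fst ` C)"
  proof
    fix x :: real assume "x \<in> {real_of_int n..real_of_int n + 1}"
    obtain p where p: "p \<in> C" "x \<in> fst p" using cover[of x] by (auto simp: case_prod_beta)
    show "x \<in> \<Union> (fst ` C)" using p by (intro UnionI[OF imageI[OF p(1)]])
  qed
  have op: "open G" if "G \<in> fst ` C" for G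
  proof -
    obtain p where p: "p \<in> C" "G = fst p" using \<open>G \<in> fst ` C\<close> by blast
    have "(fst p, snd p) \<in> C" using p by simp
    then show ?thesis using chart p(2) by blast
  qed
  obtain e where e: "0 < e" "\<And>x. x \<in> {real_of_int n..real_of_int n + 1} \<Longrightarrow> \<exists>G\<in>fst ` C. ball x e \<subseteq> G"
    using Heine_Borel_lemma[OF compact_Icc sub op] by blast
  show ?thesis
  proof (intro exI[of _ e] conjI ballI)
    fix x assume "x \<in> {real_of_int n..real_of_int n + 1}"
    then obtain G where G: "G \<in> fst ` C" "ball x e \<subseteq> G" using e by blast
    then obtain p where p: "p \<in> C" "G = fst p" by blast
    then have "(fst p, snd p) \<in> C" by simp
    then show "\<exists>(V, g)\<in>C. ball x e \<subseteq> V" using G(2) p(2) by blast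
  qed (use e in simp)
qed

definition dl :: "int \<Rightarrow> real" where
  "dl n = (SOME \<delta>. \<delta> > 0 \<and> (\<forall>x\<in>{real_of_int n..real_of_int n + 1}. \<exists>(V, g)\<in>C. ball x \<delta> \<subseteq> V))"

lemma dl: "dl n > 0" "x \<in> {real_of_int n..real_of_int n + 1} \<Longrightarrow> \<exists>(V, g)\<in>C. ball x (dl n) \<subseteq> V"
  using someI_ex[OF leb[of n]] unfolding dl_def by blast+

definition dd :: "int \<Rightarrow> real" where "dd n = min 1 (dl n)"
definition mm :: "int \<Rightarrow> nat" where "mm n = nat \<lceil>2 / dd n\<rceil>"
definition rr :: "int \<Rightarrow> real" where "rr n = 1 / real (mm n)"
definition cen :: "int \<Rightarrow> nat \<Rightarrow> real" where "cen n j = real_of_int n + real j * rr n"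

lemma dd: "0 < dd n" "dd n \<le> 1" "dd n \<le> dl n"
  using dl(1)[of n] by (auto simp: dd_def)

lemma mm: "real (mm n) \<ge> 2 / dd n" "mm n \<ge> 2"
proof -
  show m: "real (mm n) \<ge> 2 / dd n" unfolding mm_def by linarith
  have "2 / dd n \<ge> 2" using dd[of n] by (simp add: field_simps)
  then show "mm n \<ge> 2" using m by linarith
qed

lemma rr: "0 < rr n" "rr n < dd n" "rr n < 1" "real (mm n) * rr n = 1"
proof -
  have m0: "real (mm n) > 0" using mm(2)[of n] by simp
  show "0 < rr n" using m0 by (simp add: rr_def)
  have "2 / dd n \<le> real (mm n)" by (rule mm(1))
  then have "2 \<le> real (mm n) * dd n" using dd(1)[of n] by (simp add: field_simps)
  then show "rr n < dd n" using dd(1)[of n] m0 by (simp add: rr_def field_simps)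
  then show "rr n < 1" using dd(2)[of n] by simp
  show "real (mm n) * rr n = 1" using m0 by (simp add: rr_def)
qed

lemma cen: "j \<le> mm n \<Longrightarrow> real_of_int n \<le> cen n j \<and> cen n j \<le> real_of_int n + 1"
proof -
  assume j: "j \<le> mm n"
  have "real j * rr n \<le> real (mm n) * rr n" using j rr(1)[of n] by (simp add: mult_right_mono)
  then show ?thesis using rr(1)[of n] rr(4)[of n] by (simp add: cen_def)
qed

lemma bump_ex: "j \<le> mm n \<Longrightarrow> \<exists>T. good_bump (cen n j) (rr n) T"
proof -
  assume j: "j \<le> mm n"
  obtain V g where Vg: "(V, g) \<in> C" "ball (cen n j) (dl n) \<subseteq> V"
    using dl(2)[of "cen n j" n] cen[OF j] by auto
  have "ball (cen n j) (dd n) \<subseteq> V" using Vg(2) dd(3)[of n] by auto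
  then show ?thesis using bump_exists[OF Vg(1) _ rr(1) rr(2)] by blast
qed

definition Tb :: "int \<Rightarrow> nat \<Rightarrow> real \<Rightarrow> real" where
  "Tb n j = (SOME T. good_bump (cen n j) (rr n) T)"

lemma Tb_good: "j \<le> mm n \<Longrightarrow> good_bump (cen n j) (rr n) (Tb n j)"
  unfolding Tb_def using someI_ex[OF bump_ex] by blast

lemma Tb_props:
  assumes "j \<le> mm n"
  shows "\<And>x. x \<le> cen n j - rr n \<Longrightarrow> Tb n j x = 0"
    "\<And>x. x \<ge> cen n j + rr n \<Longrightarrow> Tb n j x = 1"
    "mono (Tb n j)" "continuous_on UNIV (Tb n j)"
    "\<And>x y. x \<in> {cen n j - rr n<..<cen n j + rr n} \<Longrightarrow> y > x \<Longrightarrow> Tb n j x < Tb n j y"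
    "\<And>V g. (V, g) \<in> C \<Longrightarrow> Ck k (g ` V) (\<lambda>y. Tb n j (inv_into V g y))"
    "\<And>V g y. (V, g) \<in> C \<Longrightarrow> y \<in> g ` V \<Longrightarrow> inv_into V g y \<in> {cen n j - rr n<..<cen n j + rr n} \<Longrightarrow>
        deriv (\<lambda>y. Tb n j (inv_into V g y)) y \<noteq> 0"
  using Tb_good[OF assms] unfolding good_bump_def by blast+

lemma Tb_lo: "j \<le> mm n \<Longrightarrow> x \<le> real_of_int n - 1 \<Longrightarrow> Tb n j x = 0"
proof -
  assume j: "j \<le> mm n" and x: "x \<le> real_of_int n - 1"
  have "x \<le> cen n j - rr n" using cen[OF j] rr(3)[of n] x by linarith
  then show ?thesis using Tb_props(1)[OF j] by blast
qed

lemma Tb_hi: "j \<le> mm n \<Longrightarrow> x \<ge> real_of_int n + 2 \<Longrightarrow> Tb n j x = 1"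
proof -
  assume j: "j \<le> mm n" and x: "x \<ge> real_of_int n + 2"
  have "cen n j + rr n \<le> x" using cen[OF j] rr(3)[of n] x by linarith
  then show ?thesis using Tb_props(2)[OF j] by blast
qed

lemma cover_idx: "\<exists>n j. j \<le> mm n \<and> x \<in> {cen n j - rr n<..<cen n j + rr n}"
proof -
  define n where "n = \<lfloor>x\<rfloor>"
  define j where "j = nat \<lfloor>(x - real_of_int n) / rr n\<rfloor>"
  have r: "0 < rr n" "real (mm n) * rr n = 1" using rr by auto
  have x0: "0 \<le> x - real_of_int n" "x - real_of_int n < 1" unfolding n_def by linarith+
  have q0: "0 \<le> (x - real_of_int n) / rr n" using x0 r by simp
  have jq: "real j \<le> (x - real_of_int n) / rr n" "(x - real_of_int n) / rr n < real j + 1"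
    unfolding j_def using q0 by linarith+
  have "(x - real_of_int n) / rr n < real (mm n)"
    using x0 r by (simp add: field_simps)
  then have jm: "j \<le> mm n" using jq by linarith
  have "real j * rr n \<le> x - real_of_int n" "x - real_of_int n < (real j + 1) * rr n"
    using jq r by (simp_all add: field_simps)
  then have "x \<in> {cen n j - rr n<..<cen n j + rr n}"
    using r by (auto simp: cen_def algebra_simps)
  then show ?thesis using jm by blast
qed

lemma cover_idx_bound: "j \<le> mm n \<Longrightarrow> x \<in> {cen n j - rr n<..<cen n j + rr n} \<Longrightarrow>
    real_of_int n - 1 < x \<and> x < real_of_int n + 2"
  using cen[of j n] rr(3)[of n] by auto

end

context Rstr
begin

definition II :: "nat \<Rightarrow> (int \<times> nat) set" where
  "II N = Sigma {- int N..int N} (\<lambda>n. {..mm n})"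

lemma II_fin: "finite (II N)"
  unfolding II_def by (intro finite_SigmaI) auto

definition tm :: "int \<times> nat \<Rightarrow> real \<Rightarrow> real" where
  "tm p x = Tb (fst p) (snd p) x - Tb (fst p) (snd p) 0"

definition SS :: "nat \<Rightarrow> real \<Rightarrow> real" where
  "SS N x = (\<Sum>p\<in>II N. tm p x)"

definition NN :: "real \<Rightarrow> nat" where
  "NN x = nat \<lceil>\<bar>x\<bar>\<rceil> + 2"

definition FF :: "real \<Rightarrow> real" where
  "FF x = SS (NN x) x"

lemma tm_zero:
  assumes j: "snd p \<le> mm (fst p)" and n: "\<bar>real_of_int (fst p)\<bar> \<ge> \<bar>x\<bar> + 2"
  shows "tm p x = 0"
proof (cases "real_of_int (fst p) \<ge> 0")
  case True
  then have "x \<le> real_of_int (fst p) - 1" "0 \<le> real_of_int (fst p) - 1" using n by auto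
  then show ?thesis using Tb_lo[OF j] by (simp add: tm_def)
next
  case False
  then have "x \<ge> real_of_int (fst p) + 2" "0 \<ge> real_of_int (fst p) + 2" using n by auto
  then show ?thesis using Tb_hi[OF j] by (simp add: tm_def)
qed

lemma II_mem: "p \<in> II N \<longleftrightarrow> snd p \<le> mm (fst p) \<and> \<bar>fst p\<bar> \<le> int N"
  by (cases p) (auto simp: II_def)

lemma NN_ge: "real (NN x) \<ge> \<bar>x\<bar> + 2"
proof -
  have c: "0 \<le> \<lceil>\<bar>x\<bar>\<rceil>" by simp
  have "real (nat \<lceil>\<bar>x\<bar>\<rceil>) = real_of_int \<lceil>\<bar>x\<bar>\<rceil>" using c by simp
  moreover have "real_of_int \<lceil>\<bar>x\<bar>\<rceil> \<ge> \<bar>x\<bar>" by (rule le_of_int_ceiling)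
  ultimately show ?thesis unfolding NN_def by simp
qed

lemma int_le_real: "real_of_int a \<le> real b \<Longrightarrow> a \<le> int b"
  by (metis of_int_le_iff of_int_of_nat_eq)

lemma SS_stable:
  assumes "NN x \<le> N"
  shows "SS N x = FF x"
proof -
  have "SS (NN x) x = SS N x"
    unfolding SS_def
  proof (rule sum.mono_neutral_left[OF II_fin])
    show "II (NN x) \<subseteq> II N" using assms by (auto simp: II_mem)
    show "\<forall>p\<in>II N - II (NN x). tm p x = 0"
    proof
      fix p assume p: "p \<in> II N - II (NN x)"
      then have j: "snd p \<le> mm (fst p)" and big: "\<bar>fst p\<bar> > int (NN x)" by (auto simp: II_mem)
      have "int (NN x) + 1 \<le> \<bar>fst p\<bar>" using big by simp
      then have "real_of_int (int (NN x) + 1) \<le> real_of_int \<bar>fst p\<bar>" by (simp only: of_int_le_iff)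
      then have "real (NN x) + 1 \<le> \<bar>real_of_int (fst p)\<bar>" by simp
      then have "\<bar>real_of_int (fst p)\<bar> \<ge> \<bar>x\<bar> + 2" using NN_ge[of x] by linarith
      then show "tm p x = 0" by (rule tm_zero[OF j])
    qed
  qed
  then show ?thesis by (simp add: FF_def)
qed

lemma NN_local: "\<bar>y - x\<bar> < 1 \<Longrightarrow> NN y \<le> NN x + 1"
proof -
  assume "\<bar>y - x\<bar> < 1"
  then have "\<bar>y\<bar> \<le> \<bar>x\<bar> + 1" by linarith
  then have "\<lceil>\<bar>y\<bar>\<rceil> \<le> \<lceil>\<bar>x\<bar> + 1\<rceil>" by (rule ceiling_mono)
  then have c: "\<lceil>\<bar>y\<bar>\<rceil> \<le> \<lceil>\<bar>x\<bar>\<rceil> + 1" by simp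
  have c0: "0 \<le> \<lceil>\<bar>y\<bar>\<rceil>" "0 \<le> \<lceil>\<bar>x\<bar>\<rceil>" by simp_all
  have "nat \<lceil>\<bar>y\<bar>\<rceil> \<le> nat \<lceil>\<bar>x\<bar>\<rceil> + 1" using c c0 by linarith
  then show ?thesis unfolding NN_def by simp
qed

lemma FF_local: "\<bar>y - x\<bar> < 1 \<Longrightarrow> FF y = SS (NN x + 1) y"
  using SS_stable[OF NN_local] by simp

lemma tm_mono: "p \<in> II N \<Longrightarrow> x \<le> y \<Longrightarrow> tm p x \<le> tm p y"
proof -
  assume p: "p \<in> II N" and xy: "x \<le> y"
  then have j: "snd p \<le> mm (fst p)" by (simp add: II_mem)
  have "Tb (fst p) (snd p) x \<le> Tb (fst p) (snd p) y" by (rule monoD[OF Tb_props(3)[OF j] xy])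
  then show ?thesis by (simp add: tm_def)
qed

lemma idx_in_II:
  assumes j: "j \<le> mm n" and x: "x \<in> {cen n j - rr n<..<cen n j + rr n}" and N: "NN x \<le> N"
  shows "(n, j) \<in> II N"
proof -
  have b: "real_of_int n - 1 < x" "x < real_of_int n + 2" using cover_idx_bound[OF j x] by auto
  have "\<bar>real_of_int n\<bar> \<le> real (NN x)" using b NN_ge[of x] by linarith
  then have "real_of_int \<bar>n\<bar> \<le> real (NN x)" by simp
  then have "\<bar>n\<bar> \<le> int (NN x)" by (rule int_le_real)
  then show ?thesis using j N by (auto simp: II_mem)
qed

lemma FF_strict: "x < y \<Longrightarrow> FF x < FF y"
proof -
  assume xy: "x < y"
  define N where "N = max (NN x) (NN y)"
  have e: "FF x = SS N x" "FF y = SS N y" using SS_stable[of x N] SS_stable[of y N] by (auto simp: N_def)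
  obtain n j where j: "j \<le> mm n" and x: "x \<in> {cen n j - rr n<..<cen n j + rr n}" using cover_idx by blast
  have nj: "(n, j) \<in> II N" by (rule idx_in_II[OF j x]) (simp add: N_def)
  have "SS N x < SS N y"
    unfolding SS_def
  proof (rule sum_strict_mono_ex1[OF II_fin])
    show "\<forall>p\<in>II N. tm p x \<le> tm p y" using tm_mono xy by auto
    show "\<exists>p\<in>II N. tm p x < tm p y"
      using nj Tb_props(5)[OF j x xy] by (intro bexI[of _ "(n, j)"]) (auto simp: tm_def)
  qed
  then show ?thesis using e by simp
qed

lemma FF0: "FF 0 = 0"
  by (simp add: FF_def SS_def tm_def)

lemma FF_step: "FF (real_of_int n + 2) \<ge> FF (real_of_int n - 1) + 1"
proof -
  define N where "N = max (NN (real_of_int n + 2)) (NN (real_of_int n - 1))"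
  have e: "FF (real_of_int n + 2) = SS N (real_of_int n + 2)" "FF (real_of_int n - 1) = SS N (real_of_int n - 1)"
    using SS_stable[of "real_of_int n + 2" N] SS_stable[of "real_of_int n - 1" N] by (auto simp: N_def)
  have "\<bar>real_of_int n\<bar> \<le> real N" using NN_ge[of "real_of_int n - 1"] unfolding N_def by linarith
  then have "real_of_int \<bar>n\<bar> \<le> real N" by simp
  then have "\<bar>n\<bar> \<le> int N" by (rule int_le_real)
  then have n0: "(n, 0) \<in> II N" by (simp add: II_mem)
  have "1 = tm (n, 0) (real_of_int n + 2) - tm (n, 0) (real_of_int n - 1)"
    using Tb_lo[of 0 n "real_of_int n - 1"] Tb_hi[of 0 n "real_of_int n + 2"] by (simp add: tm_def)
  also have "\<dots> \<le> (\<Sum>p\<in>II N. tm p (real_of_int n + 2) - tm p (real_of_int n - 1))"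
    by (rule member_le_sum[OF n0 _ II_fin]) (use tm_mono in auto)
  also have "\<dots> = SS N (real_of_int n + 2) - SS N (real_of_int n - 1)"
    by (simp add: SS_def sum_subtractf)
  finally show ?thesis using e by simp
qed

lemma FF_up: "FF (3 * real i) \<ge> real i"
proof (induction i)
  case 0
  then show ?case by (simp add: FF0)
next
  case (Suc i)
  have "FF (real_of_int (3 * int i + 1) + 2) \<ge> FF (real_of_int (3 * int i + 1) - 1) + 1" by (rule FF_step)
  then have "FF (3 * real i + 3) \<ge> FF (3 * real i) + 1" by (simp add: algebra_simps)
  then show ?case using Suc by (simp add: algebra_simps)
qed

lemma FF_down: "FF (- 3 * real i) \<le> - real i"
proof (induction i)
  case 0
  then show ?case by (simp add: FF0)
next
  case (Suc i)
  have "FF (real_of_int (- 3 * int i - 2) + 2) \<ge> FF (real_of_int (- 3 * int i - 2) - 1) + 1" by (rule FF_step)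
  then have st: "FF (- 3 * real i) \<ge> FF (- 3 * real i - 3) + 1" by (simp add: algebra_simps)
  have "- 3 * real (Suc i) = - 3 * real i - 3" by simp
  then have "FF (- 3 * real (Suc i)) = FF (- 3 * real i - 3)" by (rule arg_cong)
  then show ?case using Suc st by linarith
qed

lemma tm_cont: "p \<in> II N \<Longrightarrow> continuous_on UNIV (tm p)"
  unfolding tm_def using Tb_props(4)[of "snd p" "fst p"]
  by (intro continuous_intros) (auto simp: II_mem)

lemma SS_cont: "continuous_on UNIV (SS N)"
proof -
  have "continuous_on UNIV (\<lambda>x. \<Sum>p\<in>II N. tm p x)"
    by (intro continuous_on_sum) (use tm_cont in auto)
  then show ?thesis by (simp add: SS_def[abs_def])
qed

lemma FF_cont: "continuous_on UNIV FF"
proof (intro continuous_at_imp_continuous_on ballI)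
  fix x :: real
  show "isCont FF x"
  proof (rule isCont_local[OF open_ball[of x 1] _ SS_cont[THEN continuous_on_subset]])
    show "x \<in> ball x 1" by simp
    show "FF z = SS (NN x + 1) z" if "z \<in> ball x 1" for z
      using that FF_local[of z x] by (simp add: dist_real_def abs_minus_commute)
  qed simp
qed

lemma FF_surj: "surj FF"
proof -
  have "\<exists>x. FF x = y" for y
  proof -
    define i where "i = nat \<lceil>\<bar>y\<bar>\<rceil>"
    have i: "real i \<ge> \<bar>y\<bar>" unfolding i_def by linarith
    have "FF (- 3 * real i) \<le> y" using FF_down[of i] i by linarith
    moreover have "y \<le> FF (3 * real i)" using FF_up[of i] i by linarith
    moreover have "- 3 * real i \<le> 3 * real i" by simp
    ultimately show ?thesis
      using IVT'[of FF "- 3 * real i" y "3 * real i"] FF_cont continuous_on_subset by blast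
  qed
  then show ?thesis by (metis surjI)
qed

end

context Rstr
begin

lemma FF_chart_local:
  assumes Vg: "(V, g) \<in> C" and y: "y \<in> g ` V"
  defines "x0 \<equiv> inv_into V g y"
  shows "open (g ` (V \<inter> ball x0 1))" "y \<in> g ` (V \<inter> ball x0 1)"
    "\<And>z. z \<in> g ` (V \<inter> ball x0 1) \<Longrightarrow> FF (inv_into V g z) = (\<Sum>p\<in>II (NN x0 + 1). tm p (inv_into V g z))"
    "x0 \<in> V" "g x0 = y"
proof -
  have yy: "y \<in> g ` (V \<inter> UNIV)" using y by simp
  show xV: "x0 \<in> V" and gx: "g x0 = y" using inv_mem[OF Vg yy] unfolding x0_def by auto
  show "open (g ` (V \<inter> ball x0 1))" using open_img2[OF Vg open_ball] .
  show "y \<in> g ` (V \<inter> ball x0 1)" using xV gx by auto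
  fix z assume z: "z \<in> g ` (V \<inter> ball x0 1)"
  have "inv_into V g z \<in> V \<inter> ball x0 1" by (rule inv_mem(1)[OF Vg z])
  then have "\<bar>inv_into V g z - x0\<bar> < 1" by (simp add: dist_real_def abs_minus_commute)
  then show "FF (inv_into V g z) = (\<Sum>p\<in>II (NN x0 + 1). tm p (inv_into V g z))"
    using FF_local by (simp add: SS_def)
qed

lemma tm_chart_Ck:
  assumes Vg: "(V, g) \<in> C" and p: "p \<in> II N"
  shows "Ck k (g ` V) (\<lambda>z. tm p (inv_into V g z))"
proof -
  have j: "snd p \<le> mm (fst p)" using p by (simp add: II_mem)
  show ?thesis unfolding tm_def
    by (rule Ck_diff[OF open_img3[OF Vg] Tb_props(6)[OF j Vg] Ck_const])
qed

lemma FF_chart_Ck: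
  assumes Vg: "(V, g) \<in> C"
  shows "Ck k (g ` V) (\<lambda>y. FF (inv_into V g y))"
proof (rule Ck_local[OF open_img3[OF Vg]])
  fix y assume y: "y \<in> g ` V"
  define x0 where "x0 = inv_into V g y"
  let ?W = "g ` (V \<inter> ball x0 1)"
  note L = FF_chart_local[OF Vg y, folded x0_def]
  have s: "Ck k (g ` V) (\<lambda>z. \<Sum>p\<in>II (NN x0 + 1). tm p (inv_into V g z))"
    by (rule Ck_sum[OF open_img3[OF Vg] II_fin tm_chart_Ck[OF Vg]])
  have WV: "?W \<subseteq> g ` V" by auto
  have "Ck k ?W (\<lambda>z. \<Sum>p\<in>II (NN x0 + 1). tm p (inv_into V g z))"
    by (rule Ck_subset[OF L(1) WV s])
  then have "Ck k ?W (\<lambda>y. FF (inv_into V g y))"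
    by (rule Ck_cong[OF L(1), rotated]) (simp add: L(3))
  then show "\<exists>T. open T \<and> y \<in> T \<and> T \<subseteq> g ` V \<and> Ck k T (\<lambda>y. FF (inv_into V g y))"
    using L(1,2) WV by blast
qed

lemma FF_chart_deriv:
  assumes Vg: "(V, g) \<in> C" and y: "y \<in> g ` V"
  shows "deriv (\<lambda>y. FF (inv_into V g y)) y \<noteq> 0"
proof -
  define x0 where "x0 = inv_into V g y"
  define N1 where "N1 = NN x0 + 1"
  let ?W = "g ` (V \<inter> ball x0 1)"
  note L = FF_chart_local[OF Vg y, folded x0_def N1_def]
  define D where "D p = deriv (\<lambda>z. Tb (fst p) (snd p) (inv_into V g z)) y" for p
  have dp: "((\<lambda>z. Tb (fst p) (snd p) (inv_into V g z)) has_real_derivative D p) (at y)"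
    if p: "p \<in> II N1" for p
  proof -
    have j: "snd p \<le> mm (fst p)" using p by (simp add: II_mem)
    show ?thesis unfolding D_def by (rule Ck_differentiable[OF k1 Tb_props(6)[OF j Vg] y])
  qed
  have dtm: "((\<lambda>z. tm p (inv_into V g z)) has_real_derivative D p) (at y)" if p: "p \<in> II N1" for p
  proof -
    have "((\<lambda>z. Tb (fst p) (snd p) (inv_into V g z) - Tb (fst p) (snd p) 0) has_real_derivative D p - 0) (at y)"
      by (rule DERIV_diff[OF dp[OF p] DERIV_const])
    then show ?thesis by (simp add: tm_def)
  qed
  have dsum: "((\<lambda>z. \<Sum>p\<in>II N1. tm p (inv_into V g z)) has_real_derivative (\<Sum>p\<in>II N1. D p)) (at y)"
    by (rule DERIV_sum) (rule dtm)
  have dF: "((\<lambda>z. FF (inv_into V g z)) has_real_derivative (\<Sum>p\<in>II N1. D p)) (at y)"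
    by (rule has_field_derivative_transform_within_open[OF dsum L(1) L(2)]) (simp add: L(3))
  obtain n0 j0 where j0: "j0 \<le> mm n0" and x0: "x0 \<in> {cen n0 j0 - rr n0<..<cen n0 j0 + rr n0}"
    using cover_idx by blast
  have p0: "(n0, j0) \<in> II N1" by (rule idx_in_II[OF j0 x0]) (simp add: N1_def)
  have D0: "D (n0, j0) \<noteq> 0"
    unfolding D_def using Tb_props(7)[OF j0 Vg y] x0 by (simp add: x0_def)
  have monoT: "mono (Tb (fst p) (snd p))" if "p \<in> II N1" for p
    using Tb_props(3) that by (simp add: II_mem)
  have "(\<Sum>p\<in>II N1. D p) \<noteq> 0"
  proof (cases "D (n0, j0) > 0")
    case True
    have nn: "D p \<ge> 0" if p: "p \<in> II N1" for p
      by (rule deriv_sign_compat[OF monoT[OF p0] monoT[OF p] dp[OF p0] dp[OF p] True])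
    have "D (n0, j0) \<le> (\<Sum>p\<in>II N1. D p)"
      by (rule member_le_sum[OF p0 _ II_fin]) (use nn in auto)
    then show ?thesis using True by simp
  next
    case False
    then have neg: "D (n0, j0) < 0" using D0 by simp
    have np: "D p \<le> 0" if p: "p \<in> II N1" for p
      by (rule deriv_sign_compat'[OF monoT[OF p0] monoT[OF p] dp[OF p0] dp[OF p] neg])
    have "- D (n0, j0) \<le> (\<Sum>p\<in>II N1. - D p)"
      by (rule member_le_sum[OF p0 _ II_fin]) (use np in auto)
    then show ?thesis using neg by (simp add: sum_negf)
  qed
  then show ?thesis using DERIV_imp_deriv[OF dF] by simp
qed

end

context Rstr
begin

lemma FF_inj: "inj FF"
  by (metis FF_strict linorder_inj_onI' strict_mono_def strict_mono_imp_inj_on)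

lemma FF_bij: "bij FF"
  using FF_inj FF_surj by (simp add: bij_def)

lemma FF_inv_cont: "continuous_on UNIV (inv FF)"
proof -
  have "continuous_on (FF ` UNIV) (inv FF)"
    by (rule continuous_on_inverse_open[OF open_UNIV FF_cont]) (use FF_inj in auto)
  then show ?thesis using FF_surj by simp
qed

lemma FF_diffeo:
  assumes Vg: "(V, g) \<in> C"
  shows "Ck_diffeo k (g ` V) (FF ` V) (\<lambda>y. FF (inv_into V g y))"
proof -
  let ?S = "g ` V" and ?T = "FF ` V" and ?G = "\<lambda>y. FF (inv_into V g y)"
  have oS: "open ?S" by (rule open_img3[OF Vg])
  have hV: "open V" "continuous_on V g" "inj_on g V" using chart[OF Vg] by auto
  have oT: "open ?T"
    by (rule invariance_of_domain[OF continuous_on_subset[OF FF_cont] hV(1)])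
       (use FF_inj inj_on_subset in auto)
  have b1: "bij_betw (inv_into V g) ?S V" by (rule bij_betw_inv_into) (simp add: bij_betw_def hV(3))
  have "inj_on FF V" using FF_inj inj_on_subset[of FF UNIV V] by simp
  then have b2: "bij_betw FF V ?T" by (simp add: bij_betw_def)
  have bG: "bij_betw ?G ?S ?T" using bij_betw_trans[OF b1 b2] by (simp add: o_def)
  have cG: "Ck k ?S ?G" by (rule FF_chart_Ck[OF Vg])
  have GS: "?G ` ?S = ?T" using bG by (simp add: bij_betw_def)
  have injG: "inj_on ?G ?S" using bG by (simp add: bij_betw_def)
  have cinv: "Ck k ?T (inv_into ?S ?G)"
  proof (rule Ck_invfun[OF oS oT cG])
    show "deriv ?G x \<noteq> 0" if "x \<in> ?S" for x by (rule FF_chart_deriv[OF Vg that])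
    show "inv_into ?S ?G y \<in> ?S" if "y \<in> ?T" for y using that GS inv_into_into by metis
    show "?G (inv_into ?S ?G y) = y" if "y \<in> ?T" for y using that GS f_inv_into_f by metis
    have "continuous_on (?G ` ?S) (inv_into ?S ?G)"
    proof (rule continuous_on_inverse_open[OF oS Ck_cont[OF cG]])
      fix x assume "x \<in> ?S"
      from inv_into_f_f[OF injG this] show "inv_into ?S ?G (?G x) = x" by simp
    qed simp
    then show "continuous_on ?T (inv_into ?S ?G)" using GS by simp
  qed
  show ?thesis
    unfolding Ck_diffeo_def using bG Ck_on_Ck[OF oS] Ck_on_Ck[OF oT] cG cinv by blast
qed

theorem R_main: "\<exists>F. bij F \<and> continuous_on UNIV F \<and> continuous_on UNIV (inv F) \<and>
   (\<forall>V g. (V, g) \<in> C \<longrightarrow> Ck_diffeo k (g ` V) (F ` V) (\<lambda>y. F (inv_into V g y)))"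
  using FF_bij FF_cont FF_inv_cont FF_diffeo by blast

end

lemma Ck_on_cong: "(\<And>x. x \<in> S \<Longrightarrow> f x = g x) \<Longrightarrow> Ck_on k S f \<Longrightarrow> Ck_on k S g"
proof -
  assume e: "\<And>x. x \<in> S \<Longrightarrow> f x = g x" and c: "Ck_on k S f"
  then obtain D where "\<forall>x\<in>S. D 0 x = f x"
    and "\<forall>j. enat j < k \<longrightarrow> (\<forall>x\<in>S. (D j has_real_derivative D (Suc j) x) (at x))"
    and "\<forall>j. enat j \<le> k \<longrightarrow> continuous_on S (D j)"
    unfolding Ck_on_def by blast
  then show ?thesis unfolding Ck_on_def using e by (intro exI[of _ D]) auto
qed

lemma inv_into_cong':
  assumes "\<And>x. x \<in> S \<Longrightarrow> f x = g x"
  shows "inv_into S f = inv_into S g"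
proof (rule ext)
  fix y
  have "(\<lambda>x. x \<in> S \<and> f x = y) = (\<lambda>x. x \<in> S \<and> g x = y)" using assms by auto
  then show "inv_into S f y = inv_into S g y" by (simp add: inv_into_def)
qed

lemma Ck_diffeo_cong:
  assumes "Ck_diffeo k S T f" "\<And>x. x \<in> S \<Longrightarrow> f x = g x"
  shows "Ck_diffeo k S T g"
proof -
  have "bij_betw g S T" using assms bij_betw_cong unfolding Ck_diffeo_def by blast
  moreover have "Ck_on k S g" using assms Ck_on_cong unfolding Ck_diffeo_def by blast
  moreover have "Ck_on k T (inv_into S g)"
    using assms inv_into_cong'[of S f g] unfolding Ck_diffeo_def by simp
  ultimately show ?thesis unfolding Ck_diffeo_def by blast
qed

lemma Ck_diffeo_inv:
  assumes "Ck_diffeo k S T f"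
  shows "Ck_diffeo k T S (inv_into S f)"
proof -
  have b: "bij_betw f S T" using assms unfolding Ck_diffeo_def by blast
  have "bij_betw (inv_into S f) T S" by (rule bij_betw_inv_into[OF b])
  moreover have "Ck_on k T (inv_into S f)" using assms unfolding Ck_diffeo_def by blast
  moreover have "Ck_on k S (inv_into T (inv_into S f))"
  proof (rule Ck_on_cong[of S f])
    show "f x = inv_into T (inv_into S f) x" if "x \<in> S" for x
      using inv_into_inv_into_eq[OF b that] by simp
    show "Ck_on k S f" using assms unfolding Ck_diffeo_def by blast
  qed
  ultimately show ?thesis unfolding Ck_diffeo_def by blast
qed

lemma Ck_diffeo_id:
  assumes S: "open S" and f: "\<And>x. x \<in> S \<Longrightarrow> f x = x"
  shows "Ck_diffeo k S S f"
proof (rule Ck_diffeo_cong[of k S S "\<lambda>x. x"])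
  have i: "Ck_on k S (\<lambda>x. x)" using Ck_on_Ck[OF S] Ck_id by blast
  have "Ck_on k S (inv_into S (\<lambda>x. x))"
  proof (rule Ck_on_cong[OF _ i])
    show "x = inv_into S (\<lambda>x. x) x" if "x \<in> S" for x
      using inv_into_f_f[of "\<lambda>x. x" S x] that by simp
  qed
  then show "Ck_diffeo k S S (\<lambda>x. x)" unfolding Ck_diffeo_def using i by (simp add: bij_betw_def)
  show "x = f x" if "x \<in> S" for x using f that by simp
qed

lemma Cn_empty: "Cn n {} f"
  by (induction n arbitrary: f) auto

lemma Ck_empty: "Ck k {} f"
  unfolding Ck_def using Cn_empty by blast

lemma chart_img_open:
  assumes "is_chart M (V, \<psi>)" "openin M W" "W \<subseteq> V"
  shows "open (\<psi> ` W)"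
proof -
  have c: "openin M V" "open (\<psi> ` V)"
    "homeomorphic_map (subtopology M V) (subtopology euclideanreal (\<psi> ` V)) \<psi>"
    using assms(1) unfolding is_chart_def by auto
  have Vt: "V \<subseteq> topspace M" using openin_subset[OF c(1)] .
  have Wt: "W \<subseteq> topspace (subtopology M V)" using assms(3) Vt by auto
  have "openin (subtopology M V) W"
    unfolding openin_subtopology using assms(2,3) by blast
  then have "openin (subtopology euclideanreal (\<psi> ` V)) (\<psi> ` W)"
    using homeomorphic_map_openness[OF c(3) Wt] by simp
  then show ?thesis using openin_open_trans c(2) by blast
qed

lemma setup_Rstr:
  fixes k :: enat and M :: "'a topology" and A :: "('a set \<times> ('a \<Rightarrow> real)) set" and U :: "'a set"
  assumes k1: "k \<ge> 1" and atl: "Ck_atlas k M A" and oU: "openin M U"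
    and hm: "homeomorphic_maps (subtopology M U) euclideanreal h h'"
  shows "Rstr k {(h ` (U \<inter> V), \<lambda>t. \<psi> (h' t)) | V \<psi>. (V, \<psi>) \<in> A}"
proof -
  let ?C = "{(h ` (U \<inter> V), \<lambda>t. \<psi> (h' t)) | V \<psi>. (V, \<psi>) \<in> A}"
  have Ut: "U \<subseteq> topspace M" using openin_subset[OF oU] .
  have hmap: "homeomorphic_map (subtopology M U) euclideanreal h" using hm homeomorphic_maps_map by blast
  have hc: "continuous_map euclideanreal (subtopology M U) h'" using hm unfolding homeomorphic_maps_def by blast
  have hh': "h' (h x) = x" if "x \<in> U" for x using hm Ut that unfolding homeomorphic_maps_def by auto
  have h'h: "h (h' t) = t" for t using hm unfolding homeomorphic_maps_def by auto
  have h'U: "h' t \<in> U" for t using hc unfolding continuous_map_in_subtopology by auto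
  have h'M: "continuous_map euclideanreal M h'" using hc unfolding continuous_map_in_subtopology by blast
  have chA: "is_chart M c" if "c \<in> A" for c using atl that unfolding Ck_atlas_def by blast
  have coA: "Ck_compatible_charts k c d" if "c \<in> A" "d \<in> A" for c d using atl that unfolding Ck_atlas_def by blast
  have cvA: "\<Union> (fst ` A) = topspace M" using atl unfolding Ck_atlas_def by blast
  have chV: "openin M V" "open (\<psi> ` V)" "homeomorphic_map (subtopology M V) (subtopology euclideanreal (\<psi> ` V)) \<psi>"
    if "(V, \<psi>) \<in> A" for V \<psi> using chA[OF that] unfolding is_chart_def by auto
  have injV: "inj_on \<psi> V" if "(V, \<psi>) \<in> A" for V \<psi>
  proof -
    have "inj_on \<psi> (topspace (subtopology M V))" using chV(3)[OF that] unfolding homeomorphic_map_def by blast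
    moreover have "topspace (subtopology M V) = V" using openin_subset[OF chV(1)[OF that]] by auto
    ultimately show ?thesis by simp
  qed
  have memC: "\<exists>V \<psi>. (V, \<psi>) \<in> A \<and> W = h ` (U \<inter> V) \<and> g = (\<lambda>t. \<psi> (h' t))" if "(W, g) \<in> ?C" for W g
    using that by blast
  show ?thesis
  proof
    show "1 \<le> k" using k1 .
  next
    fix W g assume Og: "(W, g) \<in> ?C"
    then obtain V \<psi> where A1: "(V, \<psi>) \<in> A" and W: "W = h ` (U \<inter> V)" and g: "g = (\<lambda>t. \<psi> (h' t))"
      using memC by blast
    have UVt: "U \<inter> V \<subseteq> topspace (subtopology M U)" using Ut by auto
    have "openin (subtopology M U) (U \<inter> V)"
      unfolding openin_subtopology using chV(1)[OF A1] by blast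
    then have "openin euclideanreal (h ` (U \<inter> V))" using homeomorphic_map_openness[OF hmap UVt] by simp
    then have oW: "open W" using W open_openin by simp
    have h'W: "h' t \<in> U \<inter> V" if "t \<in> W" for t using that W hh' by auto
    have c1: "continuous_map (subtopology euclideanreal W) (subtopology M V) h'"
      unfolding continuous_map_in_subtopology
      using continuous_map_from_subtopology[OF h'M] h'W by auto
    have c2: "continuous_map (subtopology M V) (subtopology euclideanreal (\<psi> ` V)) \<psi>"
      using homeomorphic_imp_continuous_map[OF chV(3)[OF A1]] .
    have "continuous_map (subtopology euclideanreal W) (subtopology euclideanreal (\<psi> ` V)) (\<psi> \<circ> h')"
      by (rule continuous_map_compose[OF c1 c2])
    then have cW: "continuous_on W g" using g by (simp add: o_def)
    have iW: "inj_on g W"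
    proof (rule inj_onI)
      fix s t assume st: "s \<in> W" "t \<in> W" "g s = g t"
      then have "\<psi> (h' s) = \<psi> (h' t)" using g by simp
      then have "h' s = h' t" using inj_onD[OF injV[OF A1]] h'W st by blast
      then show "s = t" using h'h by metis
    qed
    show "open W \<and> continuous_on W g \<and> inj_on g W" using oW cW iW by blast
  next
    fix x :: real
    have "h' x \<in> \<Union> (fst ` A)" using h'U Ut cvA by auto
    then obtain c where c: "c \<in> A" "h' x \<in> fst c" by blast
    obtain V \<psi> where cV: "c = (V, \<psi>)" by (cases c)
    have mem: "(h ` (U \<inter> V), \<lambda>t. \<psi> (h' t)) \<in> ?C" using c cV by blast
    have "x \<in> h ` (U \<inter> V)" using c cV h'U h'h by (metis IntI fst_conv image_eqI)
    then show "\<exists>(W, g)\<in>?C. x \<in> W" using mem by blast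
  next
    fix W1 g1 W2 g2 assume m1: "(W1, g1) \<in> ?C" and m2: "(W2, g2) \<in> ?C"
    obtain V1 \<psi>1 where A1: "(V1, \<psi>1) \<in> A" and W1: "W1 = h ` (U \<inter> V1)" and g1: "g1 = (\<lambda>t. \<psi>1 (h' t))"
      using memC[OF m1] by blast
    obtain V2 \<psi>2 where A2: "(V2, \<psi>2) \<in> A" and W2: "W2 = h ` (U \<inter> V2)" and g2: "g2 = (\<lambda>t. \<psi>2 (h' t))"
      using memC[OF m2] by blast
    have injh: "inj_on h U" using hh' by (metis inj_on_inverseI)
    have OO: "W1 \<inter> W2 = h ` (U \<inter> V1 \<inter> V2)"
      using inj_on_image_Int[OF injh, of "U \<inter> V1" "U \<inter> V2"] W1 W2 by (simp add: Int_ac)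
    have SS: "g1 ` (W1 \<inter> W2) = \<psi>1 ` (U \<inter> V1 \<inter> V2)"
    proof -
      have "g1 ` (W1 \<inter> W2) = (\<lambda>x. \<psi>1 (h' (h x))) ` (U \<inter> V1 \<inter> V2)" using OO g1 by (simp add: image_image)
      also have "\<dots> = \<psi>1 ` (U \<inter> V1 \<inter> V2)" using hh' by (intro image_cong) auto
      finally show ?thesis .
    qed
    have V1t: "V1 \<subseteq> topspace M" "V2 \<subseteq> topspace M" using openin_subset chV(1) A1 A2 by blast+
    have oS: "open (\<psi>1 ` (U \<inter> V1 \<inter> V2))"
      by (rule chart_img_open[OF chA[OF A1]]) (use oU chV(1)[OF A1] chV(1)[OF A2] in auto)
    have injg1: "inj_on g1 W1"
    proof (rule inj_onI)
      fix s t assume st: "s \<in> W1" "t \<in> W1" "g1 s = g1 t"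
      have "h' s \<in> V1" "h' t \<in> V1" using st(1,2) W1 hh' by auto
      then have "h' s = h' t" using st(3) g1 inj_onD[OF injV[OF A1]] by simp
      then show "s = t" using h'h by metis
    qed
    have val: "g2 (inv_into W1 g1 y) = (\<psi>2 \<circ> inv_into V1 \<psi>1) y" if y: "y \<in> \<psi>1 ` (U \<inter> V1 \<inter> V2)" for y
    proof -
      obtain x where x: "x \<in> U \<inter> V1 \<inter> V2" "y = \<psi>1 x" using y by blast
      have "h x \<in> W1" "g1 (h x) = y" using x W1 g1 hh' by auto
      then have "inv_into W1 g1 y = h x" using inv_into_f_f[OF injg1] by metis
      moreover have "inv_into V1 \<psi>1 y = x" using x inv_into_f_f[OF injV[OF A1]] by auto
      ultimately show ?thesis using g2 hh' x by simp
    qed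
    show "Ck k (g1 ` (W1 \<inter> W2)) (\<lambda>y. g2 (inv_into W1 g1 y))"
    proof (cases "V1 \<inter> V2 = {}")
      case True
      then have "g1 ` (W1 \<inter> W2) = {}" using SS by auto
      then show ?thesis using Ck_empty by simp
    next
      case False
      then have D: "Ck_diffeo k (\<psi>1 ` (V1 \<inter> V2)) (\<psi>2 ` (V1 \<inter> V2)) (\<psi>2 \<circ> inv_into V1 \<psi>1)"
        using coA[OF A1 A2] unfolding Ck_compatible_charts_def by simp
      have oV: "open (\<psi>1 ` (V1 \<inter> V2))"
        by (rule chart_img_open[OF chA[OF A1]]) (use chV(1)[OF A1] chV(1)[OF A2] in auto)
      have "Ck k (\<psi>1 ` (V1 \<inter> V2)) (\<psi>2 \<circ> inv_into V1 \<psi>1)"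
        using D Ck_on_Ck[OF oV] unfolding Ck_diffeo_def by blast
      then have "Ck k (\<psi>1 ` (U \<inter> V1 \<inter> V2)) (\<psi>2 \<circ> inv_into V1 \<psi>1)"
        by (rule Ck_subset[OF oS, rotated]) auto
      then have "Ck k (\<psi>1 ` (U \<inter> V1 \<inter> V2)) (\<lambda>y. g2 (inv_into W1 g1 y))"
        by (rule Ck_cong[OF oS, rotated]) (simp add: val)
      then show ?thesis using SS by simp
    qed
  qed
qed

theorem corollary4p7:
  fixes k :: enat and M :: "'a topology" and A :: "('a set \<times> ('a \<Rightarrow> real)) set" and U :: "'a set"
  assumes "k \<ge> 1"
    and "locally_euclidean1 M"
    and "Ck_atlas k M A"
    and "openin M U"
    and "subtopology M U homeomorphic_space euclideanreal"
  shows "\<exists>\<phi>. homeomorphic_map (subtopology M U) euclideanreal \<phi> \<and>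
             Ck_atlas k M (A \<union> {(U, \<phi>)}) \<and>
             Ck_atlases_compatible k M A {(U, \<phi>)}"
proof -
  note k1 = assms(1) and atl = assms(3) and oU = assms(4)
  obtain h h' where hm: "homeomorphic_maps (subtopology M U) euclideanreal h h'"
    using assms(5) unfolding homeomorphic_space_def by blast
  let ?C = "{(h ` (U \<inter> V), \<lambda>t. \<psi> (h' t)) | V \<psi>. (V, \<psi>) \<in> A}"
  interpret R: Rstr k ?C by (rule setup_Rstr[OF k1 atl oU hm])
  obtain F where Fb: "bij F" and Fc: "continuous_on UNIV F" and Fic: "continuous_on UNIV (inv F)"
    and FD: "\<And>W g. (W, g) \<in> ?C \<Longrightarrow> Ck_diffeo k (g ` W) (F ` W) (\<lambda>y. F (inv_into W g y))"
    using R.R_main by blast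
  have Ut: "U \<subseteq> topspace M" using openin_subset[OF oU] .
  have hmap: "homeomorphic_map (subtopology M U) euclideanreal h" using hm homeomorphic_maps_map by blast
  have hc: "continuous_map euclideanreal (subtopology M U) h'" using hm unfolding homeomorphic_maps_def by blast
  have hh': "h' (h x) = x" if "x \<in> U" for x using hm Ut that unfolding homeomorphic_maps_def by auto
  have h'h: "h (h' t) = t" for t using hm unfolding homeomorphic_maps_def by auto
  have h'U: "h' t \<in> U" for t using hc unfolding continuous_map_in_subtopology by auto
  have chA: "is_chart M c" if "c \<in> A" for c using atl that unfolding Ck_atlas_def by blast
  have coA: "Ck_compatible_charts k c d" if "c \<in> A" "d \<in> A" for c d using atl that unfolding Ck_atlas_def by blast
  have cvA: "\<Union> (fst ` A) = topspace M" using atl unfolding Ck_atlas_def by blast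
  have injV: "inj_on \<psi> V" if "(V, \<psi>) \<in> A" for V \<psi>
  proof -
    have c: "openin M V" "homeomorphic_map (subtopology M V) (subtopology euclideanreal (\<psi> ` V)) \<psi>"
      using chA[OF that] unfolding is_chart_def by auto
    have "inj_on \<psi> (topspace (subtopology M V))" using c(2) unfolding homeomorphic_map_def by blast
    moreover have "topspace (subtopology M V) = V" using openin_subset[OF c(1)] by auto
    ultimately show ?thesis by simp
  qed
  define \<phi> where "\<phi> x = F (h x)" for x
  have Fhom: "homeomorphic_map euclideanreal euclideanreal F"
    unfolding homeomorphic_map_maps homeomorphic_maps_def
    using Fc Fic Fb by (intro exI[of _ "inv F"]) (auto simp: bij_def surj_f_inv_f)
  have phom: "homeomorphic_map (subtopology M U) euclideanreal \<phi>"
    using homeomorphic_map_compose[OF hmap Fhom] by (simp add: \<phi>_def[abs_def] o_def)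
  have hU: "h ` U = UNIV" using h'h h'U by (metis UNIV_eq_I image_eqI)
  have phiU: "\<phi> ` U = UNIV"
  proof -
    have "\<phi> ` U = F ` (h ` U)" by (auto simp: \<phi>_def)
    then show ?thesis using hU Fb by (simp add: bij_def surj_def)
  qed
  have injphi: "inj_on \<phi> U"
  proof (rule inj_onI)
    fix x y assume "x \<in> U" "y \<in> U" "\<phi> x = \<phi> y"
    then have "h x = h y" using Fb unfolding \<phi>_def bij_def inj_def by blast
    then show "x = y" using hh' \<open>x \<in> U\<close> \<open>y \<in> U\<close> by metis
  qed
  have chU: "is_chart M (U, \<phi>)"
    unfolding is_chart_def using oU phom phiU by simp
  have KD: "Ck_diffeo k (\<psi> ` (U \<inter> V)) (\<phi> ` (U \<inter> V)) (\<lambda>y. F (inv_into (h ` (U \<inter> V)) (\<lambda>t. \<psi> (h' t)) y))"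
    and Kval: "\<And>x. x \<in> U \<inter> V \<Longrightarrow> inv_into (h ` (U \<inter> V)) (\<lambda>t. \<psi> (h' t)) (\<psi> x) = h x"
    if A1: "(V, \<psi>) \<in> A" for V \<psi>
  proof -
    have m: "(h ` (U \<inter> V), \<lambda>t. \<psi> (h' t)) \<in> ?C" using A1 by blast
    have e1: "(\<lambda>t. \<psi> (h' t)) ` h ` (U \<inter> V) = \<psi> ` (U \<inter> V)"
    proof -
      have "(\<lambda>t. \<psi> (h' t)) ` h ` (U \<inter> V) = (\<lambda>x. \<psi> (h' (h x))) ` (U \<inter> V)" by (simp add: image_image)
      also have "\<dots> = \<psi> ` (U \<inter> V)" using hh' by (intro image_cong) auto
      finally show ?thesis .
    qed
    have e2: "F ` h ` (U \<inter> V) = \<phi> ` (U \<inter> V)" by (simp add: image_image \<phi>_def)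
    show "Ck_diffeo k (\<psi> ` (U \<inter> V)) (\<phi> ` (U \<inter> V)) (\<lambda>y. F (inv_into (h ` (U \<inter> V)) (\<lambda>t. \<psi> (h' t)) y))"
      using FD[OF m] e1 e2 by simp
    have inj: "inj_on (\<lambda>t. \<psi> (h' t)) (h ` (U \<inter> V))"
      using R.chart[OF m] by blast
    fix x assume x: "x \<in> U \<inter> V"
    have "h x \<in> h ` (U \<inter> V)" using x by blast
    moreover have "(\<lambda>t. \<psi> (h' t)) (h x) = \<psi> x" using x hh' by simp
    ultimately show "inv_into (h ` (U \<inter> V)) (\<lambda>t. \<psi> (h' t)) (\<psi> x) = h x"
      using inv_into_f_f[OF inj] by metis
  qed
  have comp1: "Ck_compatible_charts k (U, \<phi>) (V, \<psi>)" if A1: "(V, \<psi>) \<in> A" for V \<psi>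
  proof -
    let ?G = "\<lambda>y. F (inv_into (h ` (U \<inter> V)) (\<lambda>t. \<psi> (h' t)) y)"
    have D: "Ck_diffeo k (\<phi> ` (U \<inter> V)) (\<psi> ` (U \<inter> V)) (inv_into (\<psi> ` (U \<inter> V)) ?G)"
      by (rule Ck_diffeo_inv[OF KD[OF A1]])
    have bG: "bij_betw ?G (\<psi> ` (U \<inter> V)) (\<phi> ` (U \<inter> V))" using KD[OF A1] unfolding Ck_diffeo_def by blast
    have "Ck_diffeo k (\<phi> ` (U \<inter> V)) (\<psi> ` (U \<inter> V)) (\<psi> \<circ> inv_into U \<phi>)"
    proof (rule Ck_diffeo_cong[OF D])
      fix z assume "z \<in> \<phi> ` (U \<inter> V)"
      then obtain x where x: "x \<in> U \<inter> V" "z = \<phi> x" by blast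
      have "?G (\<psi> x) = z" using Kval[OF A1 x(1)] x by (simp add: \<phi>_def)
      moreover have "\<psi> x \<in> \<psi> ` (U \<inter> V)" using x by blast
      ultimately have "inv_into (\<psi> ` (U \<inter> V)) ?G z = \<psi> x"
        using bG unfolding bij_betw_def by (metis inv_into_f_f)
      moreover have "inv_into U \<phi> z = x" using x injphi by auto
      ultimately show "inv_into (\<psi> ` (U \<inter> V)) ?G z = (\<psi> \<circ> inv_into U \<phi>) z" by simp
    qed
    then show ?thesis unfolding Ck_compatible_charts_def by simp
  qed
  have comp2: "Ck_compatible_charts k (V, \<psi>) (U, \<phi>)" if A1: "(V, \<psi>) \<in> A" for V \<psi>
  proof -
    have "Ck_diffeo k (\<psi> ` (U \<inter> V)) (\<phi> ` (U \<inter> V)) (\<phi> \<circ> inv_into V \<psi>)"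
    proof (rule Ck_diffeo_cong[OF KD[OF A1]])
      fix w assume "w \<in> \<psi> ` (U \<inter> V)"
      then obtain x where x: "x \<in> U \<inter> V" "w = \<psi> x" by blast
      have "inv_into V \<psi> w = x" using x injV[OF A1] by auto
      then show "F (inv_into (h ` (U \<inter> V)) (\<lambda>t. \<psi> (h' t)) w) = (\<phi> \<circ> inv_into V \<psi>) w"
        using Kval[OF A1 x(1)] x by (simp add: \<phi>_def)
    qed
    then show ?thesis unfolding Ck_compatible_charts_def by (simp add: Int_commute)
  qed
  have comp3: "Ck_compatible_charts k (U, \<phi>) (U, \<phi>)"
  proof -
    have "Ck_diffeo k (\<phi> ` U) (\<phi> ` U) (\<phi> \<circ> inv_into U \<phi>)"
      using phiU by (intro Ck_diffeo_id) (auto simp: f_inv_into_f)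
    then show ?thesis unfolding Ck_compatible_charts_def by simp
  qed
  have atl2: "Ck_atlas k M (A \<union> {(U, \<phi>)})"
    unfolding Ck_atlas_def
  proof (intro conjI)
    show "\<forall>c\<in>A \<union> {(U, \<phi>)}. is_chart M c" using chA chU by blast
    show "\<Union> (fst ` (A \<union> {(U, \<phi>)})) = topspace M" using cvA Ut by auto
    show "\<forall>c\<in>A \<union> {(U, \<phi>)}. \<forall>d\<in>A \<union> {(U, \<phi>)}. Ck_compatible_charts k c d"
    proof (intro ballI)
      fix c d assume c: "c \<in> A \<union> {(U, \<phi>)}" and d: "d \<in> A \<union> {(U, \<phi>)}"
      obtain V1 \<psi>1 where c1: "c = (V1, \<psi>1)" by (cases c)
      obtain V2 \<psi>2 where d1: "d = (V2, \<psi>2)" by (cases d)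
      show "Ck_compatible_charts k c d"
      proof (cases "c \<in> A")
        case cA: True
        show ?thesis
        proof (cases "d \<in> A")
          case True
          then show ?thesis using coA cA by blast
        next
          case False
          then have "d = (U, \<phi>)" using d by blast
          then show ?thesis using comp2 cA c1 by simp
        qed
      next
        case cA: False
        then have cU: "c = (U, \<phi>)" using c by blast
        show ?thesis
        proof (cases "d \<in> A")
          case True
          then show ?thesis using comp1 cU d1 by simp
        next
          case False
          then have "d = (U, \<phi>)" using d by blast
          then show ?thesis using comp3 cU by simp
        qed
      qed
    qed
  qed
  show ?thesis
    using phom atl2 unfolding Ck_atlases_compatible_def by blast
qed

end
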